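(* Suppose that $\mathcal{R}_{k} = \{\rho_{k}(x)x;~x\in \bar{\Omega}\}$, $k \geq 1$, is a sequence of near field refractors (for the case $\kappa < -1$ or for the case $-1<\kappa<0$) such that there exists a constant $C > 0$ with $C \leq \rho_{k}(x) \leq r_{0}$ for all $x\in\bar{\Omega}$ and all $k$, and that $\rho_{k} \rightarrow \rho$ uniformly on $\bar{\Omega}$. Then (a) $\mathcal{R} := \{\rho(x)x; ~x\in \bar{\Omega}\}$ is also a near field refractor; (b) For any compact set $K\subset \bar{D}$, $$\varlimsup_{k\rightarrow \infty} \mathcal{T}_{\mathcal{R}_{k}}(K) \subset \mathcal{T}_{\mathcal{R}}(K).$$ (c) For any open set $G \subset \bar{D}$, $$\mathcal{T}_{\mathcal{R}}(G) \subset \varliminf_{k\rightarrow \infty}\mathcal{T}_{\mathcal{R}_{k}}(G) \cup E,$$ where $E$ is the singular set of $\mathcal{R}$.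
   Context: Setting: $n\geq 2$; $\Omega\subset S^{n-1}$ is a domain with $|\partial\Omega|=0$; $D\subset\mathbb{R}^n$ is contained in an $(n-1)$-dimensional hypersurface, $\bar D$ compact, $0\notin\bar D$. Medium I has refractive index $n_1>0$, medium II has $n_2<0$, and $\kappa=n_2/n_1<0$, $\kappa\neq -1$. For $r_0>0$ let $\mathcal{C}_{r_0}=\{tx;\ x\in\bar\Omega,\ 0<t\le r_0\}$. Case $\kappa<-1$: assume (i) there is $\tau\in(0,1-\frac1\kappa)$ with $\inf_{x\in\bar\Omega,P\in\bar D} x\cdot\frac{P}{|P|}\ge \tau+\frac1\kappa$; (ii) for every $m\in S^{n-1}$ and $x\in\mathcal{C}_{r_0}$, $\bar D\cap\{x+tm;\ t\ge0\}$ contains at most one point, where $r_0\in\big(0,\frac{\tau^2\kappa^2}{(1+\sqrt2)^2(1-\kappa)^2}\inf_{P\in\bar D}|P|\big)$. For $P\in\bar D$ and $\kappa|P|<b<|P|$ the refracting oval is $\Gamma(P,b)=\{h(x,P,b)x;\ x\in S^{n-1},\ x\cdot P\ge I(P,b)|P|\}$ with $h(x,P,b)=\frac{(\kappa^2x\cdot P-b)-\sqrt{(\kappa^2x\cdot P-b)^2-(\kappa^2-1)(\kappa^2|P|^2-b^2)}}{\kappa^2-1}$ and $I(P,b)=\frac{b+\sqrt{(\kappa^2-1)(\kappa^2|P|^2-b^2)}}{\kappa^2|P|}$. A surface $\mathcal{R}=\{\rho(x)x;\ x\in\bar\Omega\}\subset\mathcal{C}_{r_0}$ is a near field refractor if for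 every $x_0\in\bar\Omega$ there exist $P\in\bar D$ and $b$ with $\kappa|P|<b<|P|$ such that $\Gamma(P,b)$ supports $\mathcal{R}$ at $\rho(x_0)x_0$, i.e. $\rho(x)\ge h(x,P,b)$ for all $x\in\bar\Omega$, $\rho(x_0)=h(x_0,P,b)$, and $\bar\Omega\subset\{x\in S^{n-1};\ x\cdot\frac{P}{|P|}\ge I(P,b)\}$. Case $-1<\kappa<0$: assume (i) there is $\tau\in(0,1+\kappa)$ with $x\cdot P\ge(\tau-\kappa)|P|$ for all $x\in\bar\Omega$, $P\in\bar D$; (ii) for every $m\in S^{n-1}$ and $x\in\mathcal{C}_{r_0}$, $\bar D\cap\{x+tm;\ t\ge0\}$ contains at most one point, where $r_0\in\big(0,\frac{\tau}{1-\kappa}\mathrm{dist}(0,\bar D)\big)$. The refracting oval is $\mathcal{O}(P,b)=\{h(x,P,b)x;\ x\in S^{n-1},\ x\cdot P\ge b\}$ with $h(x,P,b)=\frac{(b-\kappa^2x\cdot P)+\sqrt{(b-\kappa^2x\cdot P)^2-(1-\kappa^2)(b^2-\kappa^2|P|^2)}}{1-\kappa^2}$. A surface $\mathcal{R}=\{\rho(x)x;\ x\in\bar\Omega\}\subset\mathcal{C}_{r_0}$ is a near field refractor if for every $x_0\in\bar\Omega$ there exist $P\in\bar D$ and $b$ with $\kappa|P|<b<|P|$ such that $\mathcal{O}(P,b)$ supports $\mathcal{R}$ at $\rho(x_0)x_0$, i.e. $\rho(x)\le h(x,P,b)$ for all $x\in\bar\Omega$ and $\rho(x_0)=h(x_0,P,b)$.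 In either case, the refractor mapping is $\mathcal{N}_{\mathcal{R}}(x)=\{P\in\bar D;$ some oval with focus $P$ ($\Gamma(P,b)$ resp. $\mathcal{O}(P,b)$) supports $\mathcal{R}$ at $\rho(x)x\}$, and the trace mapping is $\mathcal{T}_{\mathcal{R}}(P)=\{x\in\bar\Omega;\ P\in\mathcal{N}_{\mathcal{R}}(x)\}$, $\mathcal{T}_{\mathcal{R}}(F)=\bigcup_{P\in F}\mathcal{T}_{\mathcal{R}}(P)$ for $F\subset\bar D$. The singular set $E$ of $\mathcal{R}$ is the set of points $x\in\bar\Omega$ at which $\mathcal{R}$ does not have a unique normal (points of non-differentiability of $\rho$), which in particular contains $\mathcal{T}_{\mathcal{R}}(G)\cap\mathcal{T}_{\mathcal{R}}(G^c)$. *)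

theory Defs
  imports "HOL-Analysis.Analysis" "HOL-Library.Liminf_Limsup"
begin

definition C1_hypersurface :: "'a::euclidean_space set \<Rightarrow> bool" where
  "C1_hypersurface S \<longleftrightarrow>
     (\<forall>p\<in>S. \<exists>U g grad. open U \<and> p \<in> U \<and>
        (\<forall>y\<in>U. (g has_derivative (\<lambda>v. grad y \<bullet> v)) (at y)) \<and>
        continuous_on U grad \<and> (\<forall>y\<in>U. grad y \<noteq> 0) \<and>
        S \<inter> U = {y\<in>U. g y = (0::real)})"

text \<open>Zero surface measure of the (relative) boundary of \<Omega> in the sphere,
  expressed as: the cone over it (truncated at radius 1) is Lebesgue-negligible.\<close>
definition boundary_null :: "'a::euclidean_space set \<Rightarrow> bool" where
  "boundary_null \<Omega> \<longleftrightarrow>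
     negligible {t *\<^sub>R x | t x. x \<in> closure \<Omega> - \<Omega> \<and> 0 \<le> t \<and> t \<le> 1}"

definition standing :: "'a::euclidean_space set \<Rightarrow> 'a set \<Rightarrow> bool" where
  "standing \<Omega> D \<longleftrightarrow>
     DIM('a) \<ge> 2 \<and>
     \<Omega> \<subseteq> sphere 0 1 \<and> \<Omega> \<noteq> {} \<and> openin (top_of_set (sphere 0 1)) \<Omega> \<and> connected \<Omega> \<and>
     boundary_null \<Omega> \<and>
     (\<exists>S. C1_hypersurface S \<and> D \<subseteq> S) \<and>
     compact (closure D) \<and> 0 \<notin> closure D"

definition cone_r :: "'a::euclidean_space set \<Rightarrow> real \<Rightarrow> 'a set" where
  "cone_r \<Omega> r0 = {t *\<^sub>R x | t x. x \<in> closure \<Omega> \<and> 0 < t \<and> t \<le> r0}"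

definition ray_condition :: "'a::euclidean_space set \<Rightarrow> 'a set \<Rightarrow> real \<Rightarrow> bool" where
  "ray_condition \<Omega> D r0 \<longleftrightarrow>
     (\<forall>m\<in>sphere 0 1. \<forall>x\<in>cone_r \<Omega> r0.
        card (closure D \<inter> {x + t *\<^sub>R m | t. t \<ge> 0}) \<le> 1 \<and>
        finite (closure D \<inter> {x + t *\<^sub>R m | t. t \<ge> 0}))"

definition setting1 :: "real \<Rightarrow> 'a::euclidean_space set \<Rightarrow> 'a set \<Rightarrow> real \<Rightarrow> bool" where
  "setting1 \<kappa> \<Omega> D r0 \<longleftrightarrow> \<kappa> < -1 \<and>
     (\<exists>\<tau>. 0 < \<tau> \<and> \<tau> < 1 - 1/\<kappa> \<and>
        (\<forall>x\<in>closure \<Omega>. \<forall>P\<in>closure D. x \<bullet> (P /\<^sub>R norm P) \<ge> \<tau> + 1/\<kappa>) \<and>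
        0 < r0 \<and>
        r0 < \<tau>^2 * \<kappa>^2 / ((1 + sqrt 2)^2 * (1 - \<kappa>)^2) * (INF P\<in>closure D. norm P) \<and>
        ray_condition \<Omega> D r0)"

definition setting2 :: "real \<Rightarrow> 'a::euclidean_space set \<Rightarrow> 'a set \<Rightarrow> real \<Rightarrow> bool" where
  "setting2 \<kappa> \<Omega> D r0 \<longleftrightarrow> -1 < \<kappa> \<and> \<kappa> < 0 \<and>
     (\<exists>\<tau>. 0 < \<tau> \<and> \<tau> < 1 + \<kappa> \<and>
        (\<forall>x\<in>closure \<Omega>. \<forall>P\<in>closure D. x \<bullet> P \<ge> (\<tau> - \<kappa>) * norm P) \<and>
        0 < r0 \<and> r0 < \<tau> / (1 - \<kappa>) * infdist 0 (closure D) \<and>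
        ray_condition \<Omega> D r0)"

definition h1 :: "real \<Rightarrow> 'a::euclidean_space \<Rightarrow> 'a \<Rightarrow> real \<Rightarrow> real" where
  "h1 \<kappa> x P b =
     ((\<kappa>^2 * (x \<bullet> P) - b) - sqrt ((\<kappa>^2 * (x \<bullet> P) - b)^2 - (\<kappa>^2 - 1) * (\<kappa>^2 * (norm P)^2 - b^2)))
     / (\<kappa>^2 - 1)"

definition I1 :: "real \<Rightarrow> 'a::euclidean_space \<Rightarrow> real \<Rightarrow> real" where
  "I1 \<kappa> P b = (b + sqrt ((\<kappa>^2 - 1) * (\<kappa>^2 * (norm P)^2 - b^2))) / (\<kappa>^2 * norm P)"

definition h2 :: "real \<Rightarrow> 'a::euclidean_space \<Rightarrow> 'a \<Rightarrow> real \<Rightarrow> real" where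
  "h2 \<kappa> x P b =
     ((b - \<kappa>^2 * (x \<bullet> P)) + sqrt ((b - \<kappa>^2 * (x \<bullet> P))^2 - (1 - \<kappa>^2) * (b^2 - \<kappa>^2 * (norm P)^2)))
     / (1 - \<kappa>^2)"

text \<open>The oval with focus P and parameter b supports the surface {\<rho>(x)x} at \<rho>(x0)x0
  (\<Gamma>(P,b) if \<kappa> < -1, \<O>(P,b) if -1 < \<kappa> < 0).\<close>
definition supports :: "real \<Rightarrow> 'a::euclidean_space set \<Rightarrow> ('a \<Rightarrow> real) \<Rightarrow> 'a \<Rightarrow> real \<Rightarrow> 'a \<Rightarrow> bool" where
  "supports \<kappa> \<Omega> \<rho> P b x0 \<longleftrightarrow>
     (if \<kappa> < -1 then
        (\<forall>x\<in>closure \<Omega>. \<rho> x \<ge> h1 \<kappa> x P b) \<and> \<rho> x0 = h1 \<kappa> x0 P b \<and>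
        closure \<Omega> \<subseteq> {x \<in> sphere 0 1. x \<bullet> (P /\<^sub>R norm P) \<ge> I1 \<kappa> P b}
      else
        (\<forall>x\<in>closure \<Omega>. \<rho> x \<le> h2 \<kappa> x P b) \<and> \<rho> x0 = h2 \<kappa> x0 P b)"

definition near_field_refractor ::
  "real \<Rightarrow> 'a::euclidean_space set \<Rightarrow> 'a set \<Rightarrow> real \<Rightarrow> ('a \<Rightarrow> real) \<Rightarrow> bool" where
  "near_field_refractor \<kappa> \<Omega> D r0 \<rho> \<longleftrightarrow>
     {\<rho> x *\<^sub>R x | x. x \<in> closure \<Omega>} \<subseteq> cone_r \<Omega> r0 \<and>
     (\<forall>x0\<in>closure \<Omega>. \<exists>P\<in>closure D. \<exists>b. \<kappa> * norm P < b \<and> b < norm P \<and>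
        supports \<kappa> \<Omega> \<rho> P b x0)"

definition refractor_map ::
  "real \<Rightarrow> 'a::euclidean_space set \<Rightarrow> 'a set \<Rightarrow> ('a \<Rightarrow> real) \<Rightarrow> 'a \<Rightarrow> 'a set" where
  "refractor_map \<kappa> \<Omega> D \<rho> x =
     {P \<in> closure D. \<exists>b. \<kappa> * norm P < b \<and> b < norm P \<and> supports \<kappa> \<Omega> \<rho> P b x}"

definition trace_map ::
  "real \<Rightarrow> 'a::euclidean_space set \<Rightarrow> 'a set \<Rightarrow> ('a \<Rightarrow> real) \<Rightarrow> 'a set \<Rightarrow> 'a set" where
  "trace_map \<kappa> \<Omega> D \<rho> F = (\<Union>P\<in>F. {x \<in> closure \<Omega>. P \<in> refractor_map \<kappa> \<Omega> D \<rho> x})"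

text \<open>Singular set: points of closure \<Omega> at which \<rho> (viewed on the sphere, i.e. via
  its 0-homogeneous extension) is not differentiable; boundary points of \<Omega> count as singular.\<close>
definition singular_set :: "'a::euclidean_space set \<Rightarrow> ('a \<Rightarrow> real) \<Rightarrow> 'a set" where
  "singular_set \<Omega> \<rho> =
     {x \<in> closure \<Omega>. x \<notin> \<Omega> \<or> \<not> ((\<lambda>y. \<rho> (y /\<^sub>R norm y)) differentiable (at x))}"

end

theory Submission
  imports Defs
begin


lemma closure_sphere: "standing \<Omega> D \<Longrightarrow> closure \<Omega> \<subseteq> sphere 0 1"
  unfolding standing_def by (meson closed_sphere closure_minimal)

lemma normP_pos: "standing \<Omega> D \<Longrightarrow> P \<in> closure D \<Longrightarrow> norm P > 0"
  unfolding standing_def by (metis zero_less_norm_iff)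

lemma set1_facts:
  assumes "setting1 \<kappa> \<Omega> D r0" "P \<in> closure D"
  obtains \<tau> where "\<kappa> < -1" "0 < \<tau>" "\<tau> < 1 - 1/\<kappa>"
    "\<forall>x\<in>closure \<Omega>. \<forall>P\<in>closure D. x \<bullet> (P /\<^sub>R norm P) \<ge> \<tau> + 1/\<kappa>"
    "0 < r0" "(1 - \<kappa>) * r0 < - \<kappa> * \<tau> * norm P" "r0 < norm P" "ray_condition \<Omega> D r0"
proof -
  from assms(1) obtain \<tau> where k: "\<kappa> < -1" and t: "0 < \<tau>" "\<tau> < 1 - 1/\<kappa>"
    and i: "\<forall>x\<in>closure \<Omega>. \<forall>P\<in>closure D. x \<bullet> (P /\<^sub>R norm P) \<ge> \<tau> + 1/\<kappa>"
    and r: "0 < r0" "r0 < \<tau>^2 * \<kappa>^2 / ((1 + sqrt 2)^2 * (1 - \<kappa>)^2) * (INF P\<in>closure D. norm P)"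
    and rc: "ray_condition \<Omega> D r0"
    unfolding setting1_def by blast
  define q where "q = - \<kappa> * \<tau> / (1 - \<kappa>)"
  have q0: "0 < q" using k t unfolding q_def by (intro divide_pos_pos mult_pos_pos) auto
  have "- \<kappa> * \<tau> < 1 - \<kappa>"
  proof -
    have "-\<kappa> * \<tau> < -\<kappa> * (1 - 1/\<kappa>)" using k t by (intro mult_strict_left_mono) auto
    also have "\<dots> = 1 - \<kappa>" using k by (simp add: field_simps)
    finally show ?thesis .
  qed
  moreover have "0 < 1 - \<kappa>" using k by simp
  ultimately have q1: "q < 1" unfolding q_def by (simp only: pos_divide_less_eq) simp
  have eq: "\<tau>^2 * \<kappa>^2 / ((1 + sqrt 2)^2 * (1 - \<kappa>)^2) = q^2 / (1 + sqrt 2)^2"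
    using k by (simp add: q_def power_divide power_mult_distrib field_simps)
  have s1: "1 \<le> (1 + sqrt 2)^2"
  proof -
    have "1 \<le> 1 + sqrt 2" by simp
    thus ?thesis by (metis one_le_power)
  qed
  have f1: "q^2 / (1 + sqrt 2)^2 \<le> q"
  proof -
    have "q^2 / (1 + sqrt 2)^2 \<le> q^2" using s1 q0 by (simp add: divide_le_eq)
    also have "q^2 \<le> q" using q0 q1 by (simp add: power2_eq_square mult_le_cancel_right1 less_imp_le)
    finally show ?thesis .
  qed
  have f0: "0 \<le> q^2 / (1 + sqrt 2)^2" by simp
  let ?I = "(INF P\<in>closure D. norm P)"
  have I1: "?I \<le> norm P" using assms(2) by (intro cINF_lower) (auto intro: bdd_belowI[where m=0])
  have I0: "0 \<le> ?I" using assms(2) by (intro cINF_greatest) auto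
  have "r0 < q^2 / (1 + sqrt 2)^2 * ?I" using r eq by simp
  also have "\<dots> \<le> q * ?I" using f1 I0 by (intro mult_right_mono) auto
  also have "\<dots> \<le> q * norm P" using I1 q0 by (intro mult_left_mono) auto
  finally have rq: "r0 < q * norm P" .
  have "(1 - \<kappa>) * r0 < (1 - \<kappa>) * (q * norm P)" using rq k by (intro mult_strict_left_mono) auto
  also have "\<dots> = - \<kappa> * \<tau> * norm P" using k by (simp add: q_def)
  finally have A: "(1 - \<kappa>) * r0 < - \<kappa> * \<tau> * norm P" .
  have "q * norm P \<le> norm P" using q1 q0 by (intro mult_left_le_one_le) auto
  with rq have "r0 < norm P" by linarith
  with that k t i r A rc show ?thesis by blast
qed

lemma set2_facts:
  assumes "setting2 \<kappa> \<Omega> D r0" "P \<in> closure D"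
  obtains \<tau> where "-1 < \<kappa>" "\<kappa> < 0" "0 < \<tau>" "\<tau> < 1 + \<kappa>"
    "\<forall>x\<in>closure \<Omega>. \<forall>P\<in>closure D. x \<bullet> P \<ge> (\<tau> - \<kappa>) * norm P"
    "0 < r0" "r0 < \<tau> * norm P" "r0 < norm P" "ray_condition \<Omega> D r0"
proof -
  from assms(1) obtain \<tau> where k: "-1 < \<kappa>" "\<kappa> < 0" and t: "0 < \<tau>" "\<tau> < 1 + \<kappa>"
    and i: "\<forall>x\<in>closure \<Omega>. \<forall>P\<in>closure D. x \<bullet> P \<ge> (\<tau> - \<kappa>) * norm P"
    and r: "0 < r0" "r0 < \<tau> / (1 - \<kappa>) * infdist 0 (closure D)"
    and rc: "ray_condition \<Omega> D r0"
    unfolding setting2_def by blast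
  have d: "infdist 0 (closure D) \<le> norm P" using infdist_le[OF assms(2), of 0] by simp
  have d0: "0 \<le> infdist 0 (closure D)" by (simp add: infdist_nonneg)
  have f: "\<tau> / (1 - \<kappa>) \<le> \<tau>" using k t by (simp add: divide_le_eq mult_le_cancel_left1)
  have "r0 < \<tau> / (1 - \<kappa>) * infdist 0 (closure D)" by fact
  also have "\<dots> \<le> \<tau> * infdist 0 (closure D)" using f d0 by (intro mult_right_mono) auto
  also have "\<dots> \<le> \<tau> * norm P" using d t by (intro mult_left_mono) auto
  finally have A: "r0 < \<tau> * norm P" .
  have "\<tau> * norm P \<le> norm P" using t k by (intro mult_left_le_one_le) auto
  with A have "r0 < norm P" by linarith
  with that k t i r A rc show ?thesis by blast
qed



lemma h1_tendsto:
  assumes "Pn \<longlonglongrightarrow> P" "bn \<longlonglongrightarrow> b" "\<kappa>^2 \<noteq> 1"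
  shows "(\<lambda>n. h1 \<kappa> y (Pn n) (bn n)) \<longlonglongrightarrow> h1 \<kappa> y P b"
  unfolding h1_def using assms by (intro tendsto_intros assms) auto

lemma h2_tendsto:
  assumes "Pn \<longlonglongrightarrow> P" "bn \<longlonglongrightarrow> b" "\<kappa>^2 \<noteq> 1"
  shows "(\<lambda>n. h2 \<kappa> y (Pn n) (bn n)) \<longlonglongrightarrow> h2 \<kappa> y P b"
  unfolding h2_def using assms by (intro tendsto_intros assms) auto

lemma I1_tendsto:
  assumes "Pn \<longlonglongrightarrow> P" "bn \<longlonglongrightarrow> b" "P \<noteq> 0" "\<kappa> \<noteq> 0"
  shows "(\<lambda>n. I1 \<kappa> (Pn n) (bn n)) \<longlonglongrightarrow> I1 \<kappa> P b"
  unfolding I1_def using assms by (intro tendsto_intros assms) auto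

lemma dir_tendsto:
  assumes "Pn \<longlonglongrightarrow> P" "P \<noteq> 0"
  shows "(\<lambda>n. y \<bullet> (Pn n /\<^sub>R norm (Pn n))) \<longlonglongrightarrow> y \<bullet> (P /\<^sub>R norm P)"
  using assms by (intro tendsto_intros assms) auto

lemma h1_left_end:
  fixes P x :: "'a::euclidean_space"
  assumes "\<kappa> < -1" "norm P > 0" "x \<bullet> P > \<kappa> * norm P / \<kappa>^2"
  shows "h1 \<kappa> x P (\<kappa> * norm P) = 0"
proof -
  have B: "\<kappa>^2 * (x \<bullet> P) - \<kappa> * norm P > 0"
    using assms(3) assms(1) by (simp add: divide_less_eq power2_eq_square mult.commute)
  have "(\<kappa>^2 * (x \<bullet> P) - \<kappa> * norm P)^2 - (\<kappa>^2 - 1) * (\<kappa>^2 * (norm P)^2 - (\<kappa> * norm P)^2)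
     = (\<kappa>^2 * (x \<bullet> P) - \<kappa> * norm P)^2" by (simp add: power_mult_distrib)
  hence "sqrt ((\<kappa>^2 * (x \<bullet> P) - \<kappa> * norm P)^2 - (\<kappa>^2 - 1) * (\<kappa>^2 * (norm P)^2 - (\<kappa> * norm P)^2))
     = \<kappa>^2 * (x \<bullet> P) - \<kappa> * norm P" by (simp only: real_sqrt_abs) (use B in simp)
  then show ?thesis unfolding h1_def by simp
qed

lemma I1_right_end:
  fixes P :: "'a::euclidean_space"
  assumes "\<kappa> < -1" "norm P > 0"
  shows "I1 \<kappa> P (norm P) = 1"
proof -
  have k1: "1 < \<kappa>^2" using less_1_mult[of "-\<kappa>" "-\<kappa>"] assms by (simp add: power2_eq_square)
  have "(\<kappa>^2 - 1) * (\<kappa>^2 * (norm P)^2 - (norm P)^2) = ((\<kappa>^2 - 1) * norm P)^2"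
    by (simp add: power2_eq_square algebra_simps)
  moreover have "(\<kappa>^2 - 1) * norm P \<ge> 0" using assms k1
    by (intro mult_nonneg_nonneg) auto
  ultimately have "sqrt ((\<kappa>^2 - 1) * (\<kappa>^2 * (norm P)^2 - (norm P)^2)) = (\<kappa>^2 - 1) * norm P"
    by simp
  thus ?thesis using assms unfolding I1_def by (simp add: field_simps)
qed

lemma h1_right_end:
  fixes P x :: "'a::euclidean_space"
  assumes "\<kappa> < -1" "norm P > 0" "x \<bullet> P = norm P"
  shows "h1 \<kappa> x P (norm P) = norm P"
proof -
  have k: "\<kappa>^2 - 1 \<noteq> 0" using less_1_mult[of "-\<kappa>" "-\<kappa>"] assms by (simp add: power2_eq_square)
  have "(\<kappa>^2 * (x \<bullet> P) - norm P)^2 - (\<kappa>^2 - 1) * (\<kappa>^2 * (norm P)^2 - (norm P)^2) = 0"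
    using assms(3) by (simp add: power2_eq_square algebra_simps)
  then show ?thesis using assms(3) k unfolding h1_def by (simp add: field_simps)
qed

lemma h2_left_end:
  fixes P x :: "'a::euclidean_space"
  assumes "-1 < \<kappa>" "\<kappa> < 0" "norm P > 0" "norm x = 1"
  shows "h2 \<kappa> x P (\<kappa> * norm P) = 0"
proof -
  have u: "\<bar>x \<bullet> P\<bar> \<le> norm P" using Cauchy_Schwarz_ineq2[of x P] assms(4) by simp
  have "\<kappa> * (x \<bullet> P) \<le> \<bar>\<kappa> * (x \<bullet> P)\<bar>" by simp
  also have "\<dots> = \<bar>\<kappa>\<bar> * \<bar>x \<bullet> P\<bar>" by (simp add: abs_mult)
  also have "\<dots> \<le> \<bar>\<kappa>\<bar> * norm P" using u by (intro mult_left_mono) auto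
  also have "\<dots> < 1 * norm P" using assms by (intro mult_strict_right_mono) auto
  finally have "\<kappa> * (x \<bullet> P) < norm P" by simp
  hence "0 < norm P - \<kappa> * (x \<bullet> P)" by simp
  hence "\<kappa> * (norm P - \<kappa> * (x \<bullet> P)) < 0" using assms(2) by (simp add: mult_neg_pos)
  moreover have "\<kappa> * (norm P - \<kappa> * (x \<bullet> P)) = \<kappa> * norm P - \<kappa>^2 * (x \<bullet> P)"
    by (simp add: power2_eq_square algebra_simps)
  ultimately have a: "\<kappa> * norm P - \<kappa>^2 * (x \<bullet> P) < 0" by simp
  have eq: "(\<kappa> * norm P - \<kappa>^2 * (x \<bullet> P))^2 - (1 - \<kappa>^2) * ((\<kappa> * norm P)^2 - \<kappa>^2 * (norm P)^2)
    = (\<kappa> * norm P - \<kappa>^2 * (x \<bullet> P))^2" by (simp add: power_mult_distrib)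
  have "sqrt ((\<kappa> * norm P - \<kappa>^2 * (x \<bullet> P))^2 - (1 - \<kappa>^2) * ((\<kappa> * norm P)^2 - \<kappa>^2 * (norm P)^2))
    = - (\<kappa> * norm P - \<kappa>^2 * (x \<bullet> P))" by (simp only: eq real_sqrt_abs) (use a in simp)
  then show ?thesis unfolding h2_def by simp
qed

lemma h2_right_end:
  fixes P x :: "'a::euclidean_space"
  assumes "-1 < \<kappa>" "\<kappa> < 0" "norm P > 0" "norm x = 1"
  shows "h2 \<kappa> x P (norm P) \<ge> norm P"
proof -
  have u: "x \<bullet> P \<le> norm P" using Cauchy_Schwarz_ineq2[of x P] assms(4) by simp
  have k: "0 < 1 - \<kappa>^2" "\<kappa>^2 > 0" using assms abs_square_less_1[of \<kappa>] by auto
  define a where "a = norm P - \<kappa>^2 * (x \<bullet> P)"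
  have "\<kappa>^2 * (x \<bullet> P) \<le> \<kappa>^2 * norm P" using u k by (intro mult_left_mono) auto
  hence a1: "a \<ge> (1 - \<kappa>^2) * norm P" by (simp add: a_def algebra_simps)
  have a0: "(1 - \<kappa>^2) * norm P \<ge> 0" using k assms by simp
  have "((1 - \<kappa>^2) * norm P)^2 \<le> a^2" using a1 a0 by (intro power_mono) auto
  hence "0 \<le> a^2 - (1 - \<kappa>^2) * ((norm P)^2 - \<kappa>^2 * (norm P)^2)"
    by (simp add: power2_eq_square algebra_simps)
  hence "a / (1 - \<kappa>^2) \<le> h2 \<kappa> x P (norm P)" unfolding h2_def a_def[symmetric]
    using k by (intro divide_right_mono) auto
  moreover have "norm P \<le> a / (1 - \<kappa>^2)" using a1 k by (simp add: le_divide_eq mult.commute)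
  ultimately show ?thesis by linarith
qed



lemma ksq1: "(\<kappa>::real) < -1 \<Longrightarrow> 1 < \<kappa>^2"
  using less_1_mult[of "-\<kappa>" "-\<kappa>"] by (simp add: power2_eq_square)

lemma ksq2: "-1 < (\<kappa>::real) \<Longrightarrow> \<kappa> < 0 \<Longrightarrow> \<kappa>^2 < 1"
  using abs_square_less_1[of \<kappa>] by auto

lemma closure_step:
  fixes \<Omega> D :: "'a::euclidean_space set" and \<sigma> :: "nat \<Rightarrow> 'a \<Rightarrow> real"
  assumes st: "standing \<Omega> D" and sett: "setting1 \<kappa> \<Omega> D r0 \<or> setting2 \<kappa> \<Omega> D r0" and C: "C > 0"
    and bnd: "\<forall>y\<in>closure \<Omega>. C \<le> \<rho> y \<and> \<rho> y \<le> r0"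
    and conv: "\<forall>y\<in>closure \<Omega>. (\<lambda>n. \<sigma> n y) \<longlonglongrightarrow> \<rho> y"
    and x: "x \<in> closure \<Omega>"
    and Pn: "\<forall>n. Pn n \<in> closure D \<and> \<kappa> * norm (Pn n) < bn n \<and> bn n < norm (Pn n)
                  \<and> supports \<kappa> \<Omega> (\<sigma> n) (Pn n) (bn n) x"
    and limP: "Pn \<longlonglongrightarrow> P" and limb: "bn \<longlonglongrightarrow> b" and P: "P \<in> closure D"
  shows "\<kappa> * norm P < b \<and> b < norm P \<and> supports \<kappa> \<Omega> \<rho> P b x"
proof -
  have p0: "norm P > 0" using normP_pos[OF st P] .
  have nx: "norm x = 1" using closure_sphere[OF st] x by auto
  have bL: "\<kappa> * norm P \<le> b"
    by (rule tendsto_le[OF trivial_limit_sequentially limb tendsto_mult[OF tendsto_const tendsto_norm[OF limP]]]) (use Pn in \<open>auto intro!: always_eventually less_imp_le\<close>)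
  have bU: "b \<le> norm P"
    by (rule tendsto_le[OF trivial_limit_sequentially tendsto_norm[OF limP] limb]) (use Pn in \<open>auto intro!: always_eventually less_imp_le\<close>)
  have ux: "x \<bullet> P \<le> norm P" using Cauchy_Schwarz_ineq2[of x P] nx by simp
  have rhox: "C \<le> \<rho> x" "\<rho> x \<le> r0" using bnd x by auto
  show ?thesis
  proof (cases "\<kappa> < -1")
    case True
    hence s1: "setting1 \<kappa> \<Omega> D r0" using sett unfolding setting2_def by auto
    obtain \<tau> where t: "0 < \<tau>" "\<forall>x\<in>closure \<Omega>. \<forall>P\<in>closure D. x \<bullet> (P /\<^sub>R norm P) \<ge> \<tau> + 1/\<kappa>"
      and rP: "r0 < norm P" using set1_facts[OF s1 P] by metis
    have k2: "\<kappa>^2 \<noteq> 1" using ksq1[OF True] by simp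
    have sup: "\<And>n. (\<forall>y\<in>closure \<Omega>. \<sigma> n y \<ge> h1 \<kappa> y (Pn n) (bn n)) \<and> \<sigma> n x = h1 \<kappa> x (Pn n) (bn n) \<and>
        closure \<Omega> \<subseteq> {y \<in> sphere 0 1. y \<bullet> (Pn n /\<^sub>R norm (Pn n)) \<ge> I1 \<kappa> (Pn n) (bn n)}"
      using Pn True unfolding supports_def by auto
    have S1: "\<forall>y\<in>closure \<Omega>. \<rho> y \<ge> h1 \<kappa> y P b"
    proof
      fix y assume y: "y \<in> closure \<Omega>"
      show "\<rho> y \<ge> h1 \<kappa> y P b"
        by (rule tendsto_le[OF trivial_limit_sequentially conv[rule_format, OF y] h1_tendsto[OF limP limb k2]])
           (use y sup in \<open>auto intro!: always_eventually\<close>)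
    qed
    have "(\<lambda>n. \<sigma> n x) = (\<lambda>n. h1 \<kappa> x (Pn n) (bn n))" using sup by auto
    hence S2: "\<rho> x = h1 \<kappa> x P b" using conv x h1_tendsto[OF limP limb k2, of x] LIMSEQ_unique by metis
    have S3: "\<forall>y\<in>closure \<Omega>. y \<bullet> (P /\<^sub>R norm P) \<ge> I1 \<kappa> P b"
    proof
      fix y assume y: "y \<in> closure \<Omega>"
      have "\<forall>n. I1 \<kappa> (Pn n) (bn n) \<le> y \<bullet> (Pn n /\<^sub>R norm (Pn n))"
      proof
        fix n show "I1 \<kappa> (Pn n) (bn n) \<le> y \<bullet> (Pn n /\<^sub>R norm (Pn n))"
          using sup[of n] y by blast
      qed
      then show "y \<bullet> (P /\<^sub>R norm P) \<ge> I1 \<kappa> P b"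
        by (intro tendsto_le[OF trivial_limit_sequentially dir_tendsto[OF limP] I1_tendsto[OF limP limb]])
           (use p0 True in \<open>auto intro!: always_eventually\<close>)
    qed
    have b1: "b \<noteq> \<kappa> * norm P"
    proof
      assume b: "b = \<kappa> * norm P"
      have "x \<bullet> (P /\<^sub>R norm P) \<ge> \<tau> + 1/\<kappa>" using t x P by auto
      hence "(x \<bullet> P) / norm P \<ge> \<tau> + 1/\<kappa>" by (simp add: divide_inverse mult.commute)
      hence "x \<bullet> P \<ge> (\<tau> + 1/\<kappa>) * norm P" using p0 by (simp add: le_divide_eq)
      moreover have "(\<tau> + 1/\<kappa>) * norm P > (1/\<kappa>) * norm P" using t(1) p0 by (simp add: distrib_right)
      moreover have "(1/\<kappa>) * norm P = \<kappa> * norm P / \<kappa>^2" using True by (simp add: power2_eq_square)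
      ultimately have "x \<bullet> P > \<kappa> * norm P / \<kappa>^2" by linarith
      hence "h1 \<kappa> x P b = 0" using h1_left_end[OF True p0] b by simp
      thus False using S2 rhox C by simp
    qed
    have b2: "b \<noteq> norm P"
    proof
      assume b: "b = norm P"
      have "x \<bullet> (P /\<^sub>R norm P) \<ge> 1" using S3 x I1_right_end[OF True p0] b by auto
      hence "(x \<bullet> P) / norm P \<ge> 1" by (simp add: divide_inverse mult.commute)
      hence "x \<bullet> P \<ge> norm P" using p0 by (simp add: le_divide_eq)
      hence "x \<bullet> P = norm P" using ux by simp
      hence "h1 \<kappa> x P b = norm P" using h1_right_end[OF True p0] b by simp
      thus False using S2 rhox rP by simp
    qed
    have "supports \<kappa> \<Omega> \<rho> P b x"
      unfolding supports_def using True S1 S2 S3 closure_sphere[OF st] by auto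
    thus ?thesis using bL bU b1 b2 by auto
  next
    case False
    hence s2: "setting2 \<kappa> \<Omega> D r0" using sett unfolding setting1_def by auto
    obtain \<tau> where k: "-1 < \<kappa>" "\<kappa> < 0" and rP: "r0 < norm P" using set2_facts[OF s2 P] by metis
    have k2: "\<kappa>^2 \<noteq> 1" using ksq2[OF k] by simp
    have sup: "\<And>n. (\<forall>y\<in>closure \<Omega>. \<sigma> n y \<le> h2 \<kappa> y (Pn n) (bn n)) \<and> \<sigma> n x = h2 \<kappa> x (Pn n) (bn n)"
      using Pn False unfolding supports_def by auto
    have S1: "\<forall>y\<in>closure \<Omega>. \<rho> y \<le> h2 \<kappa> y P b"
    proof
      fix y assume y: "y \<in> closure \<Omega>"
      show "\<rho> y \<le> h2 \<kappa> y P b"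
        by (rule tendsto_le[OF trivial_limit_sequentially h2_tendsto[OF limP limb k2] conv[rule_format, OF y]])
           (use y sup in \<open>auto intro!: always_eventually\<close>)
    qed
    have "(\<lambda>n. \<sigma> n x) = (\<lambda>n. h2 \<kappa> x (Pn n) (bn n))" using sup by auto
    hence S2: "\<rho> x = h2 \<kappa> x P b" using conv x h2_tendsto[OF limP limb k2, of x] LIMSEQ_unique by metis
    have b1: "b \<noteq> \<kappa> * norm P"
    proof
      assume b: "b = \<kappa> * norm P"
      hence "h2 \<kappa> x P b = 0" using h2_left_end[OF k p0 nx] by simp
      thus False using S2 rhox C by simp
    qed
    have b2: "b \<noteq> norm P"
    proof
      assume b: "b = norm P"
      hence "h2 \<kappa> x P b \<ge> norm P" using h2_right_end[OF k p0 nx] by simp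
      thus False using S2 rhox rP by simp
    qed
    have "supports \<kappa> \<Omega> \<rho> P b x"
      unfolding supports_def using False S1 S2 by auto
    thus ?thesis using bL bU b1 b2 by auto
  qed
qed



lemma closure_seq:
  fixes \<Omega> D :: "'a::euclidean_space set" and \<sigma> :: "nat \<Rightarrow> 'a \<Rightarrow> real"
  assumes st: "standing \<Omega> D" and sett: "setting1 \<kappa> \<Omega> D r0 \<or> setting2 \<kappa> \<Omega> D r0" and C: "C > 0"
    and bnd: "\<forall>y\<in>closure \<Omega>. C \<le> \<rho> y \<and> \<rho> y \<le> r0"
    and conv: "\<forall>y\<in>closure \<Omega>. (\<lambda>n. \<sigma> n y) \<longlonglongrightarrow> \<rho> y"
    and x: "x \<in> closure \<Omega>" and S: "compact S" "S \<subseteq> closure D"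
    and Pn: "\<forall>n. Pn n \<in> S \<and> \<kappa> * norm (Pn n) < bn n \<and> bn n < norm (Pn n)
                  \<and> supports \<kappa> \<Omega> (\<sigma> n) (Pn n) (bn n) x"
  shows "\<exists>P\<in>S. \<exists>b. \<kappa> * norm P < b \<and> b < norm P \<and> supports \<kappa> \<Omega> \<rho> P b x"
proof -
  obtain M where M: "\<forall>P\<in>S. norm P \<le> M" using compact_imp_bounded[OF S(1)] bounded_iff by metis
  have M0: "0 \<le> M" using M Pn by (meson norm_ge_zero order_trans)
  define M' where "M' = (\<bar>\<kappa>\<bar> + 1) * M"
  have bb: "bn n \<in> cball 0 M'" for n
  proof -
    have n: "norm (Pn n) \<le> M" using M Pn by blast
    have "M \<le> M'" unfolding M'_def using M0 by (simp add: distrib_right)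
    moreover have "bn n < norm (Pn n)" using Pn by simp
    ultimately have "bn n \<le> M'" using n by linarith
    moreover have "- bn n \<le> M'"
    proof -
      have "- bn n < - \<kappa> * norm (Pn n)" using Pn by simp
      also have "\<dots> \<le> \<bar>\<kappa>\<bar> * norm (Pn n)" by (intro mult_right_mono) auto
      also have "\<dots> \<le> \<bar>\<kappa>\<bar> * M" using n by (intro mult_left_mono) auto
      also have "\<dots> \<le> M'" unfolding M'_def using M0 by (simp add: distrib_right)
      finally show ?thesis by simp
    qed
    ultimately show ?thesis by (simp add: abs_le_iff)
  qed
  have cpt: "compact (S \<times> cball (0::real) M')" using S(1) by (intro compact_Times compact_cball)
  have "\<forall>n. (Pn n, bn n) \<in> S \<times> cball 0 M'" using Pn bb by blast
  then obtain l r where l: "l \<in> S \<times> cball 0 M'" and r: "strict_mono r"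
    and lim: "((\<lambda>n. (Pn n, bn n)) \<circ> r) \<longlonglongrightarrow> l"
    by (rule seq_compactE[OF compact_imp_seq_compact[OF cpt]])
  obtain P b where lPb: "l = (P, b)" by fastforce
  have limP: "(Pn \<circ> r) \<longlonglongrightarrow> P" using tendsto_fst[OF lim] lPb by (simp add: comp_def)
  have limb: "(bn \<circ> r) \<longlonglongrightarrow> b" using tendsto_snd[OF lim] lPb by (simp add: comp_def)
  have P: "P \<in> S" using l lPb by auto
  have conv': "\<forall>y\<in>closure \<Omega>. (\<lambda>n. (\<sigma> \<circ> r) n y) \<longlonglongrightarrow> \<rho> y"
  proof
    fix y assume "y \<in> closure \<Omega>"
    hence "(\<lambda>n. \<sigma> n y) \<longlonglongrightarrow> \<rho> y" using conv by auto
    from LIMSEQ_subseq_LIMSEQ[OF this r] show "(\<lambda>n. (\<sigma> \<circ> r) n y) \<longlonglongrightarrow> \<rho> y" by (simp add: comp_def)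
  qed
  have Pn': "\<forall>n. (Pn \<circ> r) n \<in> closure D \<and> \<kappa> * norm ((Pn \<circ> r) n) < (bn \<circ> r) n \<and> (bn \<circ> r) n < norm ((Pn \<circ> r) n)
                  \<and> supports \<kappa> \<Omega> ((\<sigma> \<circ> r) n) ((Pn \<circ> r) n) ((bn \<circ> r) n) x"
  proof
    fix n show "(Pn \<circ> r) n \<in> closure D \<and> \<kappa> * norm ((Pn \<circ> r) n) < (bn \<circ> r) n \<and> (bn \<circ> r) n < norm ((Pn \<circ> r) n)
                  \<and> supports \<kappa> \<Omega> ((\<sigma> \<circ> r) n) ((Pn \<circ> r) n) ((bn \<circ> r) n) x"
      using Pn[rule_format, of "r n"] S(2) unfolding comp_def by blast
  qed
  have "\<kappa> * norm P < b \<and> b < norm P \<and> supports \<kappa> \<Omega> \<rho> P b x"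
    by (rule closure_step[OF st sett C bnd conv' x Pn' limP limb]) (use S P in blast)
  thus ?thesis using P by blast
qed

lemma rho_bounds:
  assumes "\<And>k x. x \<in> closure \<Omega> \<Longrightarrow> C \<le> \<rho>s k x \<and> \<rho>s k x \<le> r0"
    and "uniform_limit (closure \<Omega>) \<rho>s \<rho> sequentially"
  shows "\<forall>y\<in>closure \<Omega>. (\<lambda>n. \<rho>s n y) \<longlonglongrightarrow> \<rho> y" "\<forall>y\<in>closure \<Omega>. C \<le> \<rho> y \<and> \<rho> y \<le> (r0::real)"
proof -
  show c: "\<forall>y\<in>closure \<Omega>. (\<lambda>n. \<rho>s n y) \<longlonglongrightarrow> \<rho> y" using tendsto_uniform_limitI[OF assms(2)] by auto
  show "\<forall>y\<in>closure \<Omega>. C \<le> \<rho> y \<and> \<rho> y \<le> (r0::real)"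
  proof
    fix y assume y: "y \<in> closure \<Omega>"
    have "C \<le> \<rho> y" by (rule tendsto_lowerbound[OF c[rule_format, OF y]]) (use assms(1) y in auto)
    moreover have "\<rho> y \<le> r0" by (rule tendsto_upperbound[OF c[rule_format, OF y]]) (use assms(1) y in auto)
    ultimately show "C \<le> \<rho> y \<and> \<rho> y \<le> r0" by simp
  qed
qed

lemma part_a:
  fixes \<Omega> D :: "'a::euclidean_space set"
  assumes st: "standing \<Omega> D" and sett: "setting1 \<kappa> \<Omega> D r0 \<or> setting2 \<kappa> \<Omega> D r0"
    and nf: "\<And>k. near_field_refractor \<kappa> \<Omega> D r0 (\<rho>s k)" and C: "C > 0"
    and bnd: "\<forall>y\<in>closure \<Omega>. C \<le> \<rho> y \<and> \<rho> y \<le> r0"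
    and conv: "\<forall>y\<in>closure \<Omega>. (\<lambda>n. \<rho>s n y) \<longlonglongrightarrow> \<rho> y"
  shows "near_field_refractor \<kappa> \<Omega> D r0 \<rho>"
  unfolding near_field_refractor_def
proof (intro conjI ballI)
  show "{\<rho> x *\<^sub>R x |x. x \<in> closure \<Omega>} \<subseteq> cone_r \<Omega> r0"
  proof
    fix z assume "z \<in> {\<rho> x *\<^sub>R x |x. x \<in> closure \<Omega>}"
    then obtain x where z: "z = \<rho> x *\<^sub>R x" and x: "x \<in> closure \<Omega>" by blast
    have "0 < \<rho> x" "\<rho> x \<le> r0" using bnd x C by auto
    thus "z \<in> cone_r \<Omega> r0" unfolding cone_r_def using z x by blast
  qed
next
  fix x0 assume x0: "x0 \<in> closure \<Omega>"
  have "\<forall>k. \<exists>Pb. fst Pb \<in> closure D \<and> \<kappa> * norm (fst Pb) < snd Pb \<and> snd Pb < norm (fst Pb)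
             \<and> supports \<kappa> \<Omega> (\<rho>s k) (fst Pb) (snd Pb) x0"
  proof
    fix k
    obtain P b where "P \<in> closure D" "\<kappa> * norm P < b" "b < norm P" "supports \<kappa> \<Omega> (\<rho>s k) P b x0"
      using nf[of k] x0 unfolding near_field_refractor_def by blast
    thus "\<exists>Pb. fst Pb \<in> closure D \<and> \<kappa> * norm (fst Pb) < snd Pb \<and> snd Pb < norm (fst Pb)
             \<and> supports \<kappa> \<Omega> (\<rho>s k) (fst Pb) (snd Pb) x0" by (intro exI[of _ "(P, b)"]) simp
  qed
  from choice[OF this] obtain Pb where Pb: "\<forall>k. fst (Pb k) \<in> closure D \<and> \<kappa> * norm (fst (Pb k)) < snd (Pb k) \<and> snd (Pb k) < norm (fst (Pb k))
             \<and> supports \<kappa> \<Omega> (\<rho>s k) (fst (Pb k)) (snd (Pb k)) x0" by blast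
  have cD: "compact (closure D)" using st unfolding standing_def by blast
  show "\<exists>P\<in>closure D. \<exists>b. \<kappa> * norm P < b \<and> b < norm P \<and> supports \<kappa> \<Omega> \<rho> P b x0"
    by (rule closure_seq[OF st sett C bnd conv x0 cD subset_refl, of "\<lambda>k. fst (Pb k)" "\<lambda>k. snd (Pb k)"]) (use Pb in auto)
qed

lemma part_b:
  fixes \<Omega> D :: "'a::euclidean_space set"
  assumes st: "standing \<Omega> D" and sett: "setting1 \<kappa> \<Omega> D r0 \<or> setting2 \<kappa> \<Omega> D r0"
    and C: "C > 0"
    and bnd: "\<forall>y\<in>closure \<Omega>. C \<le> \<rho> y \<and> \<rho> y \<le> r0"
    and conv: "\<forall>y\<in>closure \<Omega>. (\<lambda>n. \<rho>s n y) \<longlonglongrightarrow> \<rho> y"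
    and K: "compact K" "K \<subseteq> closure D"
  shows "limsup (\<lambda>k. trace_map \<kappa> \<Omega> D (\<rho>s k) K) \<subseteq> trace_map \<kappa> \<Omega> D \<rho> K"
proof
  fix x assume "x \<in> limsup (\<lambda>k. trace_map \<kappa> \<Omega> D (\<rho>s k) K)"
  hence "\<forall>N. \<exists>n\<ge>N. x \<in> trace_map \<kappa> \<Omega> D (\<rho>s n) K"
    unfolding mem_limsup_iff frequently_sequentially .
  then obtain j where j: "\<forall>N. j N \<ge> N \<and> x \<in> trace_map \<kappa> \<Omega> D (\<rho>s (j N)) K" by (rule choice[THEN exE]) 
  have x: "x \<in> closure \<Omega>" using j unfolding trace_map_def by auto
  have "\<forall>N. \<exists>Pb. fst Pb \<in> K \<and> \<kappa> * norm (fst Pb) < snd Pb \<and> snd Pb < norm (fst Pb)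
             \<and> supports \<kappa> \<Omega> (\<rho>s (j N)) (fst Pb) (snd Pb) x"
  proof
    fix N
    obtain P b where "P \<in> K" "\<kappa> * norm P < b" "b < norm P" "supports \<kappa> \<Omega> (\<rho>s (j N)) P b x"
      using j[rule_format, of N] unfolding trace_map_def refractor_map_def by blast
    thus "\<exists>Pb. fst Pb \<in> K \<and> \<kappa> * norm (fst Pb) < snd Pb \<and> snd Pb < norm (fst Pb)
             \<and> supports \<kappa> \<Omega> (\<rho>s (j N)) (fst Pb) (snd Pb) x" by (intro exI[of _ "(P, b)"]) simp
  qed
  from choice[OF this] obtain Pb where Pb: "\<forall>N. fst (Pb N) \<in> K \<and> \<kappa> * norm (fst (Pb N)) < snd (Pb N) \<and> snd (Pb N) < norm (fst (Pb N))
             \<and> supports \<kappa> \<Omega> (\<rho>s (j N)) (fst (Pb N)) (snd (Pb N)) x" by blast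
  have fj: "filterlim j sequentially sequentially"
    by (rule filterlim_at_top_mono[OF filterlim_ident]) (use j in auto)
  have conv': "\<forall>y\<in>closure \<Omega>. (\<lambda>n. \<rho>s (j n) y) \<longlonglongrightarrow> \<rho> y"
  proof
    fix y assume "y \<in> closure \<Omega>"
    hence "(\<lambda>n. \<rho>s n y) \<longlonglongrightarrow> \<rho> y" using conv by auto
    from filterlim_compose[OF this fj] show "(\<lambda>n. \<rho>s (j n) y) \<longlonglongrightarrow> \<rho> y" .
  qed
  have "\<exists>P\<in>K. \<exists>b. \<kappa> * norm P < b \<and> b < norm P \<and> supports \<kappa> \<Omega> \<rho> P b x"
    by (rule closure_seq[OF st sett C bnd conv' x K, of "\<lambda>k. fst (Pb k)" "\<lambda>k. snd (Pb k)"]) (use Pb in auto)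
  thus "x \<in> trace_map \<kappa> \<Omega> D \<rho> K"
    unfolding trace_map_def refractor_map_def using x K by auto
qed



lemma dist_sq:
  fixes y P :: "'a::euclidean_space"
  assumes "norm y = 1"
  shows "(norm (t *\<^sub>R y - P))^2 = t^2 - 2*t*(y \<bullet> P) + (norm P)^2"
proof -
  have "(norm (t *\<^sub>R y - P))^2 = (t *\<^sub>R y - P) \<bullet> (t *\<^sub>R y - P)" by (simp add: power2_norm_eq_inner)
  also have "\<dots> = t^2 * (y \<bullet> y) - 2*t*(y \<bullet> P) + P \<bullet> P"
    by (simp add: inner_diff_left inner_diff_right inner_commute power2_eq_square algebra_simps)
  also have "y \<bullet> y = 1" using assms by (simp add: power2_norm_eq_inner[symmetric])
  finally show ?thesis by (simp add: power2_norm_eq_inner)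
qed

lemma Q_factor:
  "(t - b)^2 - \<kappa>^2 * d^2 = (t + \<kappa> * d - b) * (t - \<kappa> * d - (b::real))"
  by (simp add: power2_eq_square algebra_simps)

lemma h2_root:
  fixes y P :: "'a::euclidean_space"
  assumes k: "-1 < \<kappa>" "\<kappa> < 0" and y: "norm y = 1"
  shows "h2 \<kappa> y P b + \<kappa> * norm (h2 \<kappa> y P b *\<^sub>R y - P) = b"
proof -
  define u where "u = y \<bullet> P"
  define p where "p = norm P"
  define A where "A = 1 - \<kappa>^2"
  define B where "B = b - \<kappa>^2 * u"
  define Cc where "Cc = b^2 - \<kappa>^2 * p^2"
  define disc where "disc = B^2 - A * Cc"
  have A0: "A > 0" unfolding A_def using ksq2[OF k] by simp
  have Qd: "(t - b)^2 - \<kappa>^2 * (norm (t *\<^sub>R y - P))^2 = A * t^2 - 2 * B * t + Cc" for t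
    unfolding dist_sq[OF y] A_def B_def Cc_def u_def p_def by (simp add: power2_eq_square algebra_simps)
  have Qs: "A * (A * t^2 - 2 * B * t + Cc) = (A * t - B)^2 - disc" for t
    unfolding disc_def by (simp add: power2_eq_square algebra_simps)
  have "A * b^2 - 2 * B * b + Cc \<le> 0" using Qd[of b, symmetric] by simp
  hence "A * (A * b^2 - 2 * B * b + Cc) \<le> 0" using A0 by (intro mult_nonneg_nonpos) auto
  hence "(A * b - B)^2 - disc \<le> 0" using Qs[of b] by simp
  hence d1: "(A * b - B)^2 \<le> disc" by simp
  hence d0: "0 \<le> disc" using zero_le_power2[of "A * b - B"] by linarith
  have "sqrt ((A * b - B)^2) \<le> sqrt disc" using d1 by (rule real_sqrt_le_mono)
  hence "\<bar>A * b - B\<bar> \<le> sqrt disc" by simp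
  hence "A * b \<le> B + sqrt disc" by linarith
  have h2e: "h2 \<kappa> y P b = (B + sqrt disc) / A"
    unfolding h2_def disc_def A_def B_def Cc_def u_def p_def by simp
  define h where "h = h2 \<kappa> y P b"
  have hb: "b \<le> h" unfolding h_def h2e using \<open>A * b \<le> B + sqrt disc\<close> A0 by (simp add: le_divide_eq mult.commute)
  have "A * h - B = sqrt disc" unfolding h_def h2e using A0 by simp
  hence "(A * h - B)^2 - disc = 0" using d0 by simp
  hence "A * (A * h^2 - 2 * B * h + Cc) = 0" using Qs by simp
  hence "A * h^2 - 2 * B * h + Cc = 0" using A0 by simp
  hence "(h + \<kappa> * norm (h *\<^sub>R y - P) - b) * (h - \<kappa> * norm (h *\<^sub>R y - P) - b) = 0"
    using Qd[of h] Q_factor[of h b \<kappa> "norm (h *\<^sub>R y - P)"] by simp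
  moreover have "h - \<kappa> * norm (h *\<^sub>R y - P) - b = 0 \<Longrightarrow> h + \<kappa> * norm (h *\<^sub>R y - P) - b = 0"
  proof -
    assume a: "h - \<kappa> * norm (h *\<^sub>R y - P) - b = 0"
    have "0 \<le> - \<kappa> * norm (h *\<^sub>R y - P)" using k by (intro mult_nonneg_nonneg) auto
    hence z: "\<kappa> * norm (h *\<^sub>R y - P) = 0" using a hb by linarith
    show ?thesis using a z by linarith
  qed
  ultimately show ?thesis unfolding h_def by auto
qed

lemma Ft_mono2:
  fixes y P :: "'a::euclidean_space"
  assumes k: "-1 < \<kappa>" "\<kappa> < 0" and y: "norm y = 1" and st: "s \<le> t"
  shows "s + \<kappa> * norm (s *\<^sub>R y - P) \<le> t + \<kappa> * norm (t *\<^sub>R y - P)"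
proof -
  have "\<bar>norm (t *\<^sub>R y - P) - norm (s *\<^sub>R y - P)\<bar> \<le> norm ((t *\<^sub>R y - P) - (s *\<^sub>R y - P))"
    by (rule norm_triangle_ineq3)
  also have "(t *\<^sub>R y - P) - (s *\<^sub>R y - P) = (t - s) *\<^sub>R y" by (simp add: algebra_simps)
  also have "norm \<dots> = t - s" using y st by simp
  finally have d: "\<bar>norm (t *\<^sub>R y - P) - norm (s *\<^sub>R y - P)\<bar> \<le> t - s" .
  have "- \<kappa> * (norm (t *\<^sub>R y - P) - norm (s *\<^sub>R y - P)) \<le> - \<kappa> * (t - s)"
    using d k by (intro mult_left_mono) auto
  also have "\<dots> \<le> t - s" using k st by (intro mult_left_le_one_le) auto
  finally show ?thesis by (simp add: algebra_simps)
qed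

lemma dist_lower:
  fixes y P :: "'a::euclidean_space"
  assumes y: "norm y = 1" and t: "0 \<le> t"
  shows "norm P - t \<le> norm (t *\<^sub>R y - P)"
proof -
  have "norm P \<le> norm (t *\<^sub>R y) + norm (P - t *\<^sub>R y)" by (rule norm_triangle_sub)
  thus ?thesis using y t by (simp add: norm_minus_commute)
qed

lemma h1_root:
  fixes y P :: "'a::euclidean_space"
  assumes k: "\<kappa> < -1" and y: "norm y = 1" and p0: "norm P > 0"
    and b: "\<kappa> * norm P < b" "b < norm P" and I: "y \<bullet> (P /\<^sub>R norm P) \<ge> I1 \<kappa> P b"
  shows "0 \<le> h1 \<kappa> y P b"
    and "h1 \<kappa> y P b \<le> norm P \<Longrightarrow> h1 \<kappa> y P b + \<kappa> * norm (h1 \<kappa> y P b *\<^sub>R y - P) = b"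
proof -
  define u where "u = y \<bullet> P"
  define p where "p = norm P"
  define A where "A = \<kappa>^2 - 1"
  define B where "B = \<kappa>^2 * u - b"
  define Cc where "Cc = \<kappa>^2 * p^2 - b^2"
  define disc where "disc = B^2 - A * Cc"
  have A0: "A > 0" unfolding A_def using ksq1[OF k] by simp
  have kk: "\<kappa>^2 > 0" using k by simp
  have "1 * p < (- \<kappa>) * p" using k p0 unfolding p_def by (intro mult_strict_right_mono) auto
  hence "b < - \<kappa> * p" using b unfolding p_def by simp
  moreover have "- b < - \<kappa> * p" using b unfolding p_def by simp
  ultimately have ab: "\<bar>b\<bar> < - \<kappa> * p" by linarith
  have "\<bar>b\<bar>^2 < (- \<kappa> * p)^2" using ab by (intro power_strict_mono) auto
  hence "b^2 < (- \<kappa> * p)^2" by simp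
  hence C0: "Cc > 0" unfolding Cc_def by (simp add: power_mult_distrib)
  have "u / p \<ge> I1 \<kappa> P b" using I unfolding u_def p_def by (simp add: divide_inverse mult.commute)
  moreover have I1e: "I1 \<kappa> P b = (b + sqrt (A * Cc)) / (\<kappa>^2 * p)" unfolding I1_def A_def Cc_def p_def by (rule refl)
  ultimately have "u / p \<ge> (b + sqrt (A * Cc)) / (\<kappa>^2 * p)" by (simp only:)
  moreover have p0': "0 < p" using p0 p_def by simp
  moreover have kp: "0 < \<kappa>^2 * p" using p0' kk by simp
  ultimately have "b + sqrt (A * Cc) \<le> (u / p) * (\<kappa>^2 * p)" by (simp only: pos_divide_le_eq)
  moreover have "(u / p) * (\<kappa>^2 * p) = \<kappa>^2 * u" using p0' by simp
  ultimately have "\<kappa>^2 * u \<ge> b + sqrt (A * Cc)" by simp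
  hence Bs: "B \<ge> sqrt (A * Cc)" unfolding B_def by simp
  have AC: "A * Cc \<ge> 0" using A0 C0 by simp
  have B0: "B \<ge> 0" using Bs AC real_sqrt_ge_zero[of "A * Cc"] by linarith
  have "(sqrt (A * Cc))^2 \<le> B^2" using Bs AC by (intro power_mono) auto
  hence d0: "0 \<le> disc" unfolding disc_def using AC by simp
  have "disc \<le> B^2" unfolding disc_def using AC by simp
  hence "sqrt disc \<le> sqrt (B^2)" by (rule real_sqrt_le_mono)
  hence sB: "sqrt disc \<le> B" using B0 by simp
  have h1e: "h1 \<kappa> y P b = (B - sqrt disc) / A"
    unfolding h1_def disc_def A_def B_def Cc_def u_def p_def by simp
  show "0 \<le> h1 \<kappa> y P b" unfolding h1e using sB A0 by simp
  assume hp: "h1 \<kappa> y P b \<le> norm P"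
  define h where "h = h1 \<kappa> y P b"
  have h0: "0 \<le> h" unfolding h_def h1e using sB A0 by simp
  have Qd: "\<kappa>^2 * (norm (t *\<^sub>R y - P))^2 - (t - b)^2 = A * t^2 - 2 * B * t + Cc" for t
    unfolding dist_sq[OF y] A_def B_def Cc_def u_def p_def by (simp add: power2_eq_square algebra_simps)
  have Qs: "A * (A * t^2 - 2 * B * t + Cc) = (A * t - B)^2 - disc" for t
    unfolding disc_def by (simp add: power2_eq_square algebra_simps)
  have "A * h - B = - sqrt disc" unfolding h_def h1e using A0 by simp
  hence "(A * h - B)^2 - disc = 0" using d0 by simp
  hence "A * (A * h^2 - 2 * B * h + Cc) = 0" using Qs by simp
  hence "A * h^2 - 2 * B * h + Cc = 0" using A0 by simp
  hence "(h + \<kappa> * norm (h *\<^sub>R y - P) - b) * (h - \<kappa> * norm (h *\<^sub>R y - P) - b) = 0"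
    using Qd[of h] Q_factor[of h b \<kappa> "norm (h *\<^sub>R y - P)"] by simp
  moreover have "h - \<kappa> * norm (h *\<^sub>R y - P) - b > 0"
  proof -
    have dd: "norm P - h \<le> norm (h *\<^sub>R y - P)" by (rule dist_lower[OF y h0])
    have "- \<kappa> * (norm P - h) \<le> - \<kappa> * norm (h *\<^sub>R y - P)" using dd k by (intro mult_left_mono) auto
    moreover have "1 * (norm P - h) \<le> (- \<kappa>) * (norm P - h)" using hp k unfolding h_def
      by (intro mult_right_mono) auto
    ultimately show ?thesis using b by simp
  qed
  ultimately have "h + \<kappa> * norm (h *\<^sub>R y - P) - b = 0" by simp
  thus "h1 \<kappa> y P b + \<kappa> * norm (h1 \<kappa> y P b *\<^sub>R y - P) = b" unfolding h_def by simp
qed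

lemma key1:
  fixes y P :: "'a::euclidean_space"
  assumes k: "\<kappa> < -1" and y: "norm y = 1" and p0: "norm P > 0"
    and u: "y \<bullet> (P /\<^sub>R norm P) \<ge> \<tau> + 1/\<kappa>" and r: "(1 - \<kappa>) * r0 < - \<kappa> * \<tau> * norm P"
    and s: "0 \<le> s" "s \<le> r0" and t: "0 \<le> t" "t \<le> r0"
  shows "- \<kappa> * (t + s - 2 * (y \<bullet> P)) < norm (t *\<^sub>R y - P) + norm (s *\<^sub>R y - P)"
proof -
  have sum: "2 * norm P - 2 * r0 \<le> norm (t *\<^sub>R y - P) + norm (s *\<^sub>R y - P)"
    using dist_lower[OF y t(1), of P] dist_lower[OF y s(1), of P] s t by linarith
  have "(y \<bullet> P) / norm P \<ge> \<tau> + 1/\<kappa>" using u by (simp add: divide_inverse mult.commute)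
  hence uu: "y \<bullet> P \<ge> (\<tau> + 1/\<kappa>) * norm P" using p0 by (simp add: le_divide_eq)
  have "\<kappa> * (y \<bullet> P) \<le> \<kappa> * ((\<tau> + 1/\<kappa>) * norm P)" using uu k by (intro mult_left_mono_neg) auto
  also have "\<dots> = \<kappa> * \<tau> * norm P + norm P" using k by (simp add: field_simps)
  finally have ku: "\<kappa> * (y \<bullet> P) \<le> \<kappa> * \<tau> * norm P + norm P" .
  have "- \<kappa> * (t + s) \<le> - \<kappa> * (2 * r0)" using s t k by (intro mult_left_mono) auto
  hence "- \<kappa> * (t + s - 2 * (y \<bullet> P)) \<le> - \<kappa> * (2 * r0) + 2 * (\<kappa> * \<tau> * norm P + norm P)"
    using ku by (simp add: algebra_simps)
  also have "\<dots> < 2 * norm P - 2 * r0" using r by (simp add: algebra_simps)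
  finally show ?thesis using sum by linarith
qed

lemma Ft_mono1:
  fixes y P :: "'a::euclidean_space"
  assumes k: "\<kappa> < -1" and y: "norm y = 1" and p0: "norm P > 0"
    and u: "y \<bullet> (P /\<^sub>R norm P) \<ge> \<tau> + 1/\<kappa>" and r: "(1 - \<kappa>) * r0 < - \<kappa> * \<tau> * norm P"
    and s: "0 \<le> s" "s \<le> t" and t: "t \<le> r0"
  shows "s + \<kappa> * norm (s *\<^sub>R y - P) \<le> t + \<kappa> * norm (t *\<^sub>R y - P)"
proof -
  define dt where "dt = norm (t *\<^sub>R y - P)"
  define ds where "ds = norm (s *\<^sub>R y - P)"
  have K: "- \<kappa> * (t + s - 2 * (y \<bullet> P)) < dt + ds" unfolding dt_def ds_def
    by (rule key1[OF k y p0 u r]) (use s t in auto)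
  have sq: "dt^2 - ds^2 = (t - s) * (t + s - 2 * (y \<bullet> P))"
    unfolding dt_def ds_def dist_sq[OF y] by (simp add: power2_eq_square algebra_simps)
  show ?thesis
  proof (cases "dt \<le> ds")
    case True
    hence "0 \<le> \<kappa> * (dt - ds)" using k by (intro mult_nonpos_nonpos) auto
    thus ?thesis using s unfolding dt_def ds_def by (simp add: algebra_simps)
  next
    case False
    hence pos: "0 < dt + ds" using norm_ge_zero[of "s *\<^sub>R y - P"] unfolding ds_def by linarith
    have "- \<kappa> * (dt - ds) * (dt + ds) = - \<kappa> * (dt^2 - ds^2)" by (simp add: power2_eq_square algebra_simps)
    also have "\<dots> = (t - s) * (- \<kappa> * (t + s - 2 * (y \<bullet> P)))" using sq by simp
    also have "\<dots> \<le> (t - s) * (dt + ds)" using K s by (intro mult_left_mono) auto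
    finally have "(- \<kappa> * (dt - ds)) * (dt + ds) \<le> (t - s) * (dt + ds)" by simp
    hence "- \<kappa> * (dt - ds) \<le> t - s" using pos by (rule mult_right_le_imp_le)
    thus ?thesis unfolding dt_def ds_def by (simp add: algebra_simps)
  qed
qed



lemma grad_zero:
  fixes \<Omega> :: "'a::euclidean_space set" and x P h :: 'a and \<rho> :: "'a \<Rightarrow> real"
  assumes \<Omega>o: "openin (top_of_set (sphere 0 1)) \<Omega>" and x: "x \<in> \<Omega>" and \<Omega>s: "\<Omega> \<subseteq> sphere 0 1"
    and fd: "((\<lambda>y. \<rho> (y /\<^sub>R norm y)) has_derivative f') (at x)"
    and \<rho>x: "\<rho> x > 0" and XP: "\<rho> x *\<^sub>R x \<noteq> P"
    and sign: "(\<forall>y\<in>\<Omega>. norm (\<rho> y *\<^sub>R y) + \<kappa> * norm (\<rho> y *\<^sub>R y - P) \<le> norm (\<rho> x *\<^sub>R x) + \<kappa> * norm (\<rho> x *\<^sub>R x - P))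
             \<or> (\<forall>y\<in>\<Omega>. norm (\<rho> x *\<^sub>R x) + \<kappa> * norm (\<rho> x *\<^sub>R x - P) \<le> norm (\<rho> y *\<^sub>R y) + \<kappa> * norm (\<rho> y *\<^sub>R y - P))"
    and h: "x \<bullet> h = 0"
  shows "\<rho> x * ((sgn (\<rho> x *\<^sub>R x) + \<kappa> *\<^sub>R sgn (\<rho> x *\<^sub>R x - P)) \<bullet> h)
           + f' h * ((sgn (\<rho> x *\<^sub>R x) + \<kappa> *\<^sub>R sgn (\<rho> x *\<^sub>R x - P)) \<bullet> x) = 0"
proof -
  define X0 where "X0 = \<rho> x *\<^sub>R x"
  define w where "w = sgn X0 + \<kappa> *\<^sub>R sgn (X0 - P)"
  have nx: "norm x = 1" using x \<Omega>s by auto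
  have x0: "x \<noteq> 0" using nx by auto
  define N where "N = (\<lambda>y::'a. y /\<^sub>R norm y)"
  have Nx: "N x = x" unfolding N_def using nx by simp
  define N' where "N' = (\<lambda>h. inverse (norm x) *\<^sub>R h + (- (inverse (norm x) * (h \<bullet> sgn x) * inverse (norm x))) *\<^sub>R x)"
  have dN: "(N has_derivative N') (at x)"
    unfolding N_def N'_def
    by (rule has_derivative_scaleR[OF Deriv.has_derivative_inverse[OF _ has_derivative_norm[OF x0]] has_derivative_ident])
       (use x0 in simp)
  have N'h: "N' h = h" unfolding N'_def using nx h by (simp add: sgn_div_norm inner_commute)
  have fd': "((\<lambda>y. \<rho> (N y)) has_derivative f') (at x)" using fd unfolding N_def .
  have dX: "((\<lambda>y. \<rho> (N y) *\<^sub>R N y) has_derivative (\<lambda>h. \<rho> (N x) *\<^sub>R N' h + f' h *\<^sub>R N x)) (at x)"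
    by (rule has_derivative_scaleR[OF fd' dN])
  have X00: "X0 \<noteq> 0" unfolding X0_def using \<rho>x x0 by simp
  have X0P: "X0 - P \<noteq> 0" unfolding X0_def using XP by simp
  define \<Phi> where "\<Phi> = (\<lambda>X::'a. norm X + \<kappa> * norm (X - P))"
  define \<Phi>' where "\<Phi>' = (\<lambda>k::'a. k \<bullet> sgn X0 + \<kappa> * ((k - 0) \<bullet> sgn (X0 - P)))"
  have dPhi: "(\<Phi> has_derivative \<Phi>') (at X0)"
    unfolding \<Phi>_def \<Phi>'_def
    by (rule has_derivative_add[OF has_derivative_norm[OF X00]
          has_derivative_mult_right[OF has_derivative_compose[OF has_derivative_diff[OF has_derivative_ident has_derivative_const] has_derivative_norm[OF X0P]]]])
  have XN: "\<rho> (N x) *\<^sub>R N x = X0" unfolding X0_def Nx ..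
  have dPhi': "(\<Phi> has_derivative \<Phi>') (at (\<rho> (N x) *\<^sub>R N x))" unfolding XN by (rule dPhi)
  have dG: "((\<lambda>y. \<Phi> (\<rho> (N y) *\<^sub>R N y)) has_derivative (\<lambda>h. \<Phi>' (\<rho> (N x) *\<^sub>R N' h + f' h *\<^sub>R N x))) (at x)"
    by (rule has_derivative_compose[OF dX dPhi'])
  obtain T where T: "open T" "\<Omega> = sphere 0 1 \<inter> T" using \<Omega>o unfolding openin_open by blast
  define S where "S = ball x 1 \<inter> N -` T"
  have nz: "y \<in> ball x 1 \<Longrightarrow> y \<noteq> 0" for y using nx by (auto simp: dist_norm)
  have cN: "continuous_on (ball x 1) N" unfolding N_def
    by (intro continuous_intros) (auto dest: nz)
  have oS: "open S" unfolding S_def by (rule continuous_open_preimage[OF cN open_ball T(1)])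
  have xS: "x \<in> S" unfolding S_def using Nx x T by auto
  have NyO: "y \<in> S \<Longrightarrow> N y \<in> \<Omega>" for y
  proof -
    assume y: "y \<in> S"
    hence "y \<noteq> 0" "N y \<in> T" unfolding S_def using nz by auto
    moreover have "norm (N y) = 1" unfolding N_def using \<open>y \<noteq> 0\<close> by simp
    ultimately show "N y \<in> \<Omega>" using T by auto
  qed
  have Gx: "\<Phi> (\<rho> (N x) *\<^sub>R N x) = \<Phi> (\<rho> x *\<^sub>R x)" unfolding Nx ..
  have mono: "(\<forall>y\<in>S. \<Phi> (\<rho> (N y) *\<^sub>R N y) \<le> \<Phi> (\<rho> (N x) *\<^sub>R N x)) \<or> (\<forall>y\<in>S. \<Phi> (\<rho> (N x) *\<^sub>R N x) \<le> \<Phi> (\<rho> (N y) *\<^sub>R N y))"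
    unfolding Gx using sign NyO unfolding \<Phi>_def by blast
  have "(\<lambda>h. \<Phi>' (\<rho> (N x) *\<^sub>R N' h + f' h *\<^sub>R N x)) = (\<lambda>v. 0)"
    by (rule differential_zero_maxmin[OF xS oS dG mono])
  hence "\<Phi>' (\<rho> (N x) *\<^sub>R N' h + f' h *\<^sub>R N x) = 0" by metis
  hence "\<Phi>' (\<rho> x *\<^sub>R h + f' h *\<^sub>R x) = 0" unfolding Nx N'h .
  hence "(\<rho> x *\<^sub>R h + f' h *\<^sub>R x) \<bullet> w = 0" unfolding \<Phi>'_def w_def
    by (simp add: inner_add_right inner_scaleR_right)
  moreover have "(\<rho> x *\<^sub>R h + f' h *\<^sub>R x) \<bullet> w = \<rho> x * (w \<bullet> h) + f' h * (w \<bullet> x)"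
    by (simp only: inner_add_left inner_scaleR_left inner_commute[of h w] inner_commute[of x w])
  ultimately have "\<rho> x * (w \<bullet> h) + f' h * (w \<bullet> x) = 0" by simp
  thus ?thesis unfolding w_def X0_def .
qed



lemma lin_alg:
  fixes x w1 w2 :: "'a::euclidean_space" and f' :: "'a \<Rightarrow> real"
  assumes nx: "norm x = 1" and a1: "w1 \<bullet> x > 0" and a2: "w2 \<bullet> x > 0" and r: "rx > 0"
    and H1: "\<forall>h. x \<bullet> h = 0 \<longrightarrow> rx * (w1 \<bullet> h) + f' h * (w1 \<bullet> x) = 0"
    and H2: "\<forall>h. x \<bullet> h = 0 \<longrightarrow> rx * (w2 \<bullet> h) + f' h * (w2 \<bullet> x) = 0"
  shows "w1 = ((w1 \<bullet> x) / (w2 \<bullet> x)) *\<^sub>R w2"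
proof -
  define u1 where "u1 = (1 / (w1 \<bullet> x)) *\<^sub>R w1"
  define u2 where "u2 = (1 / (w2 \<bullet> x)) *\<^sub>R w2"
  define d where "d = u1 - u2"
  have "x \<bullet> u1 = 1" unfolding u1_def using a1 by (simp add: inner_commute)
  moreover have "x \<bullet> u2 = 1" unfolding u2_def using a2 by (simp add: inner_commute)
  ultimately have xd: "x \<bullet> d = 0" unfolding d_def by (simp add: inner_diff_right)
  have "rx * (w1 \<bullet> d) + f' d * (w1 \<bullet> x) = 0" using H1 xd by blast
  hence e1: "u1 \<bullet> d = - f' d / rx" unfolding u1_def using a1 r by (simp add: field_simps)
  have "rx * (w2 \<bullet> d) + f' d * (w2 \<bullet> x) = 0" using H2 xd by blast
  hence e2: "u2 \<bullet> d = - f' d / rx" unfolding u2_def using a2 r by (simp add: field_simps)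
  have "d \<bullet> d = 0" using e1 e2 unfolding d_def by (simp add: inner_diff_left inner_diff_right)
  hence "d = 0" by simp
  hence "u1 = u2" unfolding d_def by simp
  hence "(w1 \<bullet> x) *\<^sub>R u1 = (w1 \<bullet> x) *\<^sub>R u2" by simp
  moreover have "(w1 \<bullet> x) *\<^sub>R u1 = w1" unfolding u1_def using a1 by simp
  ultimately have "w1 = (w1 \<bullet> x) *\<^sub>R u2" by simp
  thus ?thesis unfolding u2_def by simp
qed

lemma w_formulas:
  fixes x P :: "'a::euclidean_space"
  assumes nx: "norm x = 1" and r: "rx > 0" and XP: "rx *\<^sub>R x \<noteq> P"
  shows "(sgn (rx *\<^sub>R x) + \<kappa> *\<^sub>R sgn (rx *\<^sub>R x - P)) \<bullet> x = 1 + \<kappa> * ((rx - x \<bullet> P) / norm (rx *\<^sub>R x - P))"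
    and "(norm (sgn (rx *\<^sub>R x) + \<kappa> *\<^sub>R sgn (rx *\<^sub>R x - P)))^2
          = 2 * ((sgn (rx *\<^sub>R x) + \<kappa> *\<^sub>R sgn (rx *\<^sub>R x - P)) \<bullet> x) - 1 + \<kappa>^2"
proof -
  define e where "e = sgn (rx *\<^sub>R x - P)"
  have sx: "sgn (rx *\<^sub>R x) = x" using nx r by (simp add: sgn_scaleR sgn_div_norm)
  have ne: "norm e = 1" unfolding e_def using XP by (simp add: norm_sgn)
  have xx: "x \<bullet> x = 1" using nx by (simp add: norm_eq_1)
  have ee: "e \<bullet> e = 1" using ne by (simp add: norm_eq_1)
  have ex: "e \<bullet> x = (rx - x \<bullet> P) / norm (rx *\<^sub>R x - P)"
  proof -
    have "x \<bullet> (rx *\<^sub>R x - P) = rx - x \<bullet> P" using xx by (simp add: inner_diff_right)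
    thus ?thesis unfolding e_def sgn_div_norm by (simp add: inner_commute divide_inverse mult.commute)
  qed
  show "(sgn (rx *\<^sub>R x) + \<kappa> *\<^sub>R sgn (rx *\<^sub>R x - P)) \<bullet> x = 1 + \<kappa> * ((rx - x \<bullet> P) / norm (rx *\<^sub>R x - P))"
    unfolding sx e_def[symmetric] using xx ex by (simp add: inner_add_left)
  have "(norm (x + \<kappa> *\<^sub>R e))^2 = (x + \<kappa> *\<^sub>R e) \<bullet> (x + \<kappa> *\<^sub>R e)" by (simp add: power2_norm_eq_inner)
  also have "\<dots> = x \<bullet> x + 2 * \<kappa> * (e \<bullet> x) + \<kappa>^2 * (e \<bullet> e)"
    by (simp add: inner_add_left inner_add_right inner_commute power2_eq_square algebra_simps)
  also have "\<dots> = 2 * ((x + \<kappa> *\<^sub>R e) \<bullet> x) - 1 + \<kappa>^2" using xx ee by (simp add: inner_add_left algebra_simps)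
  finally show "(norm (sgn (rx *\<^sub>R x) + \<kappa> *\<^sub>R sgn (rx *\<^sub>R x - P)))^2
          = 2 * ((sgn (rx *\<^sub>R x) + \<kappa> *\<^sub>R sgn (rx *\<^sub>R x - P)) \<bullet> x) - 1 + \<kappa>^2"
    unfolding sx e_def[symmetric] .
qed


lemma oval_facts:
  fixes \<Omega> D :: "'a::euclidean_space set"
  assumes st: "standing \<Omega> D" and sett: "setting1 \<kappa> \<Omega> D r0 \<or> setting2 \<kappa> \<Omega> D r0" and C: "C > 0"
    and bnd: "\<forall>y\<in>closure \<Omega>. C \<le> \<rho> y \<and> \<rho> y \<le> r0"
    and x: "x \<in> closure \<Omega>" and P: "P \<in> closure D" and b: "\<kappa> * norm P < b" "b < norm P"
    and sup: "supports \<kappa> \<Omega> \<rho> P b x"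
  shows "\<rho> x *\<^sub>R x \<noteq> P"
    and "(\<forall>y\<in>closure \<Omega>. norm (\<rho> y *\<^sub>R y) + \<kappa> * norm (\<rho> y *\<^sub>R y - P) \<le> norm (\<rho> x *\<^sub>R x) + \<kappa> * norm (\<rho> x *\<^sub>R x - P))
         \<or> (\<forall>y\<in>closure \<Omega>. norm (\<rho> x *\<^sub>R x) + \<kappa> * norm (\<rho> x *\<^sub>R x - P) \<le> norm (\<rho> y *\<^sub>R y) + \<kappa> * norm (\<rho> y *\<^sub>R y - P))"
    and "(sgn (\<rho> x *\<^sub>R x) + \<kappa> *\<^sub>R sgn (\<rho> x *\<^sub>R x - P)) \<bullet> x > 0"
    and "\<not> \<kappa> < -1 \<Longrightarrow> (sgn (\<rho> x *\<^sub>R x) + \<kappa> *\<^sub>R sgn (\<rho> x *\<^sub>R x - P)) \<bullet> x > 1"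
proof -
  have nx: "norm x = 1" using closure_sphere[OF st] x by auto
  have p0: "norm P > 0" using normP_pos[OF st P] .
  have ny: "norm y = 1" if "y \<in> closure \<Omega>" for y using closure_sphere[OF st] that by auto
  have rx: "C \<le> \<rho> x" "\<rho> x \<le> r0" using bnd x by auto
  have rP: "r0 < norm P"
  proof (cases "\<kappa> < -1")
    case True
    hence "setting1 \<kappa> \<Omega> D r0" using sett unfolding setting2_def by auto
    thus ?thesis using set1_facts[OF _ P] by metis
  next
    case False
    hence "setting2 \<kappa> \<Omega> D r0" using sett unfolding setting1_def by auto
    thus ?thesis using set2_facts[OF _ P] by metis
  qed
  have nX: "norm (\<rho> y *\<^sub>R y) = \<rho> y" if "y \<in> closure \<Omega>" for y
    using ny[OF that] bnd that C by auto
  show XP: "\<rho> x *\<^sub>R x \<noteq> P" using nX[OF x] rx rP by auto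
  define d where "d = norm (\<rho> x *\<^sub>R x - P)"
  have d0: "d > 0" unfolding d_def using XP by simp
  have wx: "(sgn (\<rho> x *\<^sub>R x) + \<kappa> *\<^sub>R sgn (\<rho> x *\<^sub>R x - P)) \<bullet> x = 1 + \<kappa> * ((\<rho> x - x \<bullet> P) / d)"
    unfolding d_def by (rule w_formulas(1)[OF nx _ XP]) (use rx C in auto)
  show "(\<forall>y\<in>closure \<Omega>. norm (\<rho> y *\<^sub>R y) + \<kappa> * norm (\<rho> y *\<^sub>R y - P) \<le> norm (\<rho> x *\<^sub>R x) + \<kappa> * norm (\<rho> x *\<^sub>R x - P))
         \<or> (\<forall>y\<in>closure \<Omega>. norm (\<rho> x *\<^sub>R x) + \<kappa> * norm (\<rho> x *\<^sub>R x - P) \<le> norm (\<rho> y *\<^sub>R y) + \<kappa> * norm (\<rho> y *\<^sub>R y - P))"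
   and "(sgn (\<rho> x *\<^sub>R x) + \<kappa> *\<^sub>R sgn (\<rho> x *\<^sub>R x - P)) \<bullet> x > 0"
   and "\<not> \<kappa> < -1 \<Longrightarrow> (sgn (\<rho> x *\<^sub>R x) + \<kappa> *\<^sub>R sgn (\<rho> x *\<^sub>R x - P)) \<bullet> x > 1"
  proof -
    consider (c1) "\<kappa> < -1" | (c2) "\<not> \<kappa> < -1" by blast
    then have "((\<forall>y\<in>closure \<Omega>. norm (\<rho> y *\<^sub>R y) + \<kappa> * norm (\<rho> y *\<^sub>R y - P) \<le> norm (\<rho> x *\<^sub>R x) + \<kappa> * norm (\<rho> x *\<^sub>R x - P))
         \<or> (\<forall>y\<in>closure \<Omega>. norm (\<rho> x *\<^sub>R x) + \<kappa> * norm (\<rho> x *\<^sub>R x - P) \<le> norm (\<rho> y *\<^sub>R y) + \<kappa> * norm (\<rho> y *\<^sub>R y - P)))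
       \<and> (sgn (\<rho> x *\<^sub>R x) + \<kappa> *\<^sub>R sgn (\<rho> x *\<^sub>R x - P)) \<bullet> x > 0
       \<and> (\<not> \<kappa> < -1 \<longrightarrow> (sgn (\<rho> x *\<^sub>R x) + \<kappa> *\<^sub>R sgn (\<rho> x *\<^sub>R x - P)) \<bullet> x > 1)"
    proof cases
      case c1
      hence s1: "setting1 \<kappa> \<Omega> D r0" using sett unfolding setting2_def by auto
      obtain \<tau> where t: "\<forall>x\<in>closure \<Omega>. \<forall>P\<in>closure D. x \<bullet> (P /\<^sub>R norm P) \<ge> \<tau> + 1/\<kappa>"
        and r: "(1 - \<kappa>) * r0 < - \<kappa> * \<tau> * norm P" using set1_facts[OF s1 P] by metis
      have S1: "\<forall>y\<in>closure \<Omega>. \<rho> y \<ge> h1 \<kappa> y P b" and S2: "\<rho> x = h1 \<kappa> x P b"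
        and S3: "closure \<Omega> \<subseteq> {y \<in> sphere 0 1. y \<bullet> (P /\<^sub>R norm P) \<ge> I1 \<kappa> P b}"
        using sup c1 unfolding supports_def by auto
      have Fb: "h1 \<kappa> y P b + \<kappa> * norm (h1 \<kappa> y P b *\<^sub>R y - P) = b" "0 \<le> h1 \<kappa> y P b"
        if y: "y \<in> closure \<Omega>" for y
      proof -
        have I: "y \<bullet> (P /\<^sub>R norm P) \<ge> I1 \<kappa> P b" using S3 y by auto
        show "0 \<le> h1 \<kappa> y P b" by (rule h1_root(1)[OF c1 ny[OF y] p0 b I])
        have "h1 \<kappa> y P b \<le> norm P" using S1 y bnd rP by force
        thus "h1 \<kappa> y P b + \<kappa> * norm (h1 \<kappa> y P b *\<^sub>R y - P) = b" by (rule h1_root(2)[OF c1 ny[OF y] p0 b I])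
      qed
      have sg: "\<forall>y\<in>closure \<Omega>. norm (\<rho> x *\<^sub>R x) + \<kappa> * norm (\<rho> x *\<^sub>R x - P) \<le> norm (\<rho> y *\<^sub>R y) + \<kappa> * norm (\<rho> y *\<^sub>R y - P)"
      proof
        fix y assume y: "y \<in> closure \<Omega>"
        have "norm (\<rho> x *\<^sub>R x) + \<kappa> * norm (\<rho> x *\<^sub>R x - P) = b" using nX[OF x] Fb(1)[OF x] S2 by simp
        also have "b = h1 \<kappa> y P b + \<kappa> * norm (h1 \<kappa> y P b *\<^sub>R y - P)" using Fb(1)[OF y] by simp
        also have "\<dots> \<le> \<rho> y + \<kappa> * norm (\<rho> y *\<^sub>R y - P)"
          by (rule Ft_mono1[OF c1 ny[OF y] p0 _ r]) (use t y P S1 bnd Fb(2)[OF y] in auto)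
        also have "\<dots> = norm (\<rho> y *\<^sub>R y) + \<kappa> * norm (\<rho> y *\<^sub>R y - P)" using nX[OF y] by simp
        finally show "norm (\<rho> x *\<^sub>R x) + \<kappa> * norm (\<rho> x *\<^sub>R x - P) \<le> norm (\<rho> y *\<^sub>R y) + \<kappa> * norm (\<rho> y *\<^sub>R y - P)" .
      qed
      have "- \<kappa> * (\<rho> x + \<rho> x - 2 * (x \<bullet> P)) < d + d" unfolding d_def
        by (rule key1[OF c1 nx p0 _ r]) (use t x P rx C in auto)
      hence "- \<kappa> * (\<rho> x - x \<bullet> P) < d" by (simp add: algebra_simps)
      hence "- \<kappa> * (\<rho> x - x \<bullet> P) / d < 1" using d0 by (simp only: pos_divide_less_eq)
      moreover have "- \<kappa> * (\<rho> x - x \<bullet> P) / d = - (\<kappa> * ((\<rho> x - x \<bullet> P) / d))" by simp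
      ultimately have "0 < 1 + \<kappa> * ((\<rho> x - x \<bullet> P) / d)" by linarith
      thus ?thesis using sg wx c1 by simp
    next
      case c2
      hence s2: "setting2 \<kappa> \<Omega> D r0" using sett unfolding setting1_def by auto
      obtain \<tau> where k: "-1 < \<kappa>" "\<kappa> < 0" and t0: "0 < \<tau>"
        and t: "\<forall>x\<in>closure \<Omega>. \<forall>P\<in>closure D. x \<bullet> P \<ge> (\<tau> - \<kappa>) * norm P"
        and r: "r0 < \<tau> * norm P" using set2_facts[OF s2 P] by metis
      have S1: "\<forall>y\<in>closure \<Omega>. \<rho> y \<le> h2 \<kappa> y P b" and S2: "\<rho> x = h2 \<kappa> x P b"
        using sup c2 unfolding supports_def by auto
      have sg: "\<forall>y\<in>closure \<Omega>. norm (\<rho> y *\<^sub>R y) + \<kappa> * norm (\<rho> y *\<^sub>R y - P) \<le> norm (\<rho> x *\<^sub>R x) + \<kappa> * norm (\<rho> x *\<^sub>R x - P)"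
      proof
        fix y assume y: "y \<in> closure \<Omega>"
        have "norm (\<rho> y *\<^sub>R y) + \<kappa> * norm (\<rho> y *\<^sub>R y - P) = \<rho> y + \<kappa> * norm (\<rho> y *\<^sub>R y - P)" using nX[OF y] by simp
        also have "\<dots> \<le> h2 \<kappa> y P b + \<kappa> * norm (h2 \<kappa> y P b *\<^sub>R y - P)"
          by (rule Ft_mono2[OF k ny[OF y]]) (use S1 y in auto)
        also have "\<dots> = b" by (rule h2_root[OF k ny[OF y]])
        also have "b = norm (\<rho> x *\<^sub>R x) + \<kappa> * norm (\<rho> x *\<^sub>R x - P)" using nX[OF x] h2_root[OF k nx, of P b] S2 by simp
        finally show "norm (\<rho> y *\<^sub>R y) + \<kappa> * norm (\<rho> y *\<^sub>R y - P) \<le> norm (\<rho> x *\<^sub>R x) + \<kappa> * norm (\<rho> x *\<^sub>R x - P)" .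
      qed
      have "\<tau> * norm P \<le> (\<tau> - \<kappa>) * norm P" using k p0 by (intro mult_right_mono) auto
      hence "\<rho> x < x \<bullet> P" using t x P rx r by fastforce
      hence "(\<rho> x - x \<bullet> P) / d < 0" using d0 by (simp add: divide_less_0_iff)
      hence "0 < \<kappa> * ((\<rho> x - x \<bullet> P) / d)" using k(2) by (rule mult_neg_neg[rotated])
      thus ?thesis using sg wx by simp
    qed
    thus "(\<forall>y\<in>closure \<Omega>. norm (\<rho> y *\<^sub>R y) + \<kappa> * norm (\<rho> y *\<^sub>R y - P) \<le> norm (\<rho> x *\<^sub>R x) + \<kappa> * norm (\<rho> x *\<^sub>R x - P))
         \<or> (\<forall>y\<in>closure \<Omega>. norm (\<rho> x *\<^sub>R x) + \<kappa> * norm (\<rho> x *\<^sub>R x - P) \<le> norm (\<rho> y *\<^sub>R y) + \<kappa> * norm (\<rho> y *\<^sub>R y - P))"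
      and "(sgn (\<rho> x *\<^sub>R x) + \<kappa> *\<^sub>R sgn (\<rho> x *\<^sub>R x - P)) \<bullet> x > 0"
      and "\<not> \<kappa> < -1 \<Longrightarrow> (sgn (\<rho> x *\<^sub>R x) + \<kappa> *\<^sub>R sgn (\<rho> x *\<^sub>R x - P)) \<bullet> x > 1" by auto
  qed
qed



lemma uniq:
  fixes \<Omega> D :: "'a::euclidean_space set"
  assumes st: "standing \<Omega> D" and sett: "setting1 \<kappa> \<Omega> D r0 \<or> setting2 \<kappa> \<Omega> D r0" and C: "C > 0"
    and bnd: "\<forall>y\<in>closure \<Omega>. C \<le> \<rho> y \<and> \<rho> y \<le> r0"
    and xO: "x \<in> \<Omega>" and diff: "(\<lambda>y. \<rho> (y /\<^sub>R norm y)) differentiable (at x)"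
    and P1: "P1 \<in> closure D" "\<kappa> * norm P1 < b1" "b1 < norm P1" "supports \<kappa> \<Omega> \<rho> P1 b1 x"
    and P2: "P2 \<in> closure D" "\<kappa> * norm P2 < b2" "b2 < norm P2" "supports \<kappa> \<Omega> \<rho> P2 b2 x"
  shows "P1 = P2"
proof -
  have x: "x \<in> closure \<Omega>" using xO closure_subset by blast
  obtain f' where fd: "((\<lambda>y. \<rho> (y /\<^sub>R norm y)) has_derivative f') (at x)"
    using diff unfolding differentiable_def by blast
  have \<Omega>o: "openin (top_of_set (sphere 0 1)) \<Omega>" and \<Omega>s: "\<Omega> \<subseteq> sphere 0 1"
    using st unfolding standing_def by blast+
  have nx: "norm x = 1" using xO \<Omega>s by auto
  have rx: "\<rho> x > 0" using bnd x C by force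
  define X0 where "X0 = \<rho> x *\<^sub>R x"
  define w1 where "w1 = sgn X0 + \<kappa> *\<^sub>R sgn (X0 - P1)"
  define w2 where "w2 = sgn X0 + \<kappa> *\<^sub>R sgn (X0 - P2)"
  note F1 = oval_facts[OF st sett C bnd x P1]
  note F2 = oval_facts[OF st sett C bnd x P2]
  have subO: "\<Omega> \<subseteq> closure \<Omega>" by (rule closure_subset)
  have sg1: "(\<forall>y\<in>\<Omega>. norm (\<rho> y *\<^sub>R y) + \<kappa> * norm (\<rho> y *\<^sub>R y - P1) \<le> norm (\<rho> x *\<^sub>R x) + \<kappa> * norm (\<rho> x *\<^sub>R x - P1))
         \<or> (\<forall>y\<in>\<Omega>. norm (\<rho> x *\<^sub>R x) + \<kappa> * norm (\<rho> x *\<^sub>R x - P1) \<le> norm (\<rho> y *\<^sub>R y) + \<kappa> * norm (\<rho> y *\<^sub>R y - P1))"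
    using F1(2) subO by blast
  have sg2: "(\<forall>y\<in>\<Omega>. norm (\<rho> y *\<^sub>R y) + \<kappa> * norm (\<rho> y *\<^sub>R y - P2) \<le> norm (\<rho> x *\<^sub>R x) + \<kappa> * norm (\<rho> x *\<^sub>R x - P2))
         \<or> (\<forall>y\<in>\<Omega>. norm (\<rho> x *\<^sub>R x) + \<kappa> * norm (\<rho> x *\<^sub>R x - P2) \<le> norm (\<rho> y *\<^sub>R y) + \<kappa> * norm (\<rho> y *\<^sub>R y - P2))"
    using F2(2) subO by blast
  have H1: "\<forall>h. x \<bullet> h = 0 \<longrightarrow> \<rho> x * (w1 \<bullet> h) + f' h * (w1 \<bullet> x) = 0"
    unfolding w1_def X0_def using grad_zero[OF \<Omega>o xO \<Omega>s fd rx F1(1) sg1] by blast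
  have H2: "\<forall>h. x \<bullet> h = 0 \<longrightarrow> \<rho> x * (w2 \<bullet> h) + f' h * (w2 \<bullet> x) = 0"
    unfolding w2_def X0_def using grad_zero[OF \<Omega>o xO \<Omega>s fd rx F2(1) sg2] by blast
  define a1 where "a1 = w1 \<bullet> x"
  define a2 where "a2 = w2 \<bullet> x"
  have a1p: "a1 > 0" unfolding a1_def w1_def X0_def using F1(3) .
  have a2p: "a2 > 0" unfolding a2_def w2_def X0_def using F2(3) .
  define c where "c = a1 / a2"
  have cp: "c > 0" unfolding c_def using a1p a2p by simp
  have a1c: "a1 = c * a2" unfolding c_def using a2p by simp
  have w12: "w1 = c *\<^sub>R w2" unfolding c_def a1_def a2_def
    by (rule lin_alg[OF nx _ _ rx H1 H2]) (use a1p a2p in \<open>auto simp: a1_def a2_def\<close>)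
  have n1: "(norm w1)^2 = 2 * a1 - 1 + \<kappa>^2" unfolding w1_def a1_def X0_def by (rule w_formulas(2)[OF nx rx F1(1)])
  have n2: "(norm w2)^2 = 2 * a2 - 1 + \<kappa>^2" unfolding w2_def a2_def X0_def by (rule w_formulas(2)[OF nx rx F2(1)])
  have "(norm w1)^2 = c^2 * (norm w2)^2" unfolding w12 using cp by (simp add: power_mult_distrib)
  hence E: "2 * (c * a2) - 1 + \<kappa>^2 = c^2 * (2 * a2 - 1 + \<kappa>^2)" using n1 n2 a1c by simp
  have fac: "(1 - c) * ((1 - \<kappa>^2) * (1 + c) - 2 * c * a2) = 0"
    using E by (simp add: power2_eq_square algebra_simps)
  have c1: "c = 1"
  proof (rule ccontr)
    assume cn: "c \<noteq> 1"
    hence E2: "(1 - \<kappa>^2) * (1 + c) = 2 * c * a2" using fac by simp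
    show False
    proof (cases "\<kappa> < -1")
      case True
      have "(1 - \<kappa>^2) * (1 + c) < 0" using ksq1[OF True] cp by (intro mult_neg_pos) auto
      moreover have "0 < 2 * c * a2" using cp a2p by simp
      ultimately show False using E2 by simp
    next
      case False
      have g1: "a1 > 1" unfolding a1_def w1_def X0_def using F1(4)[OF False] .
      have g2: "a2 > 1" unfolding a2_def w2_def X0_def using F2(4)[OF False] .
      have "\<kappa> \<noteq> 0"
      proof
        assume "\<kappa> = 0"
        hence "setting1 \<kappa> \<Omega> D r0 \<or> setting2 \<kappa> \<Omega> D r0 \<Longrightarrow> False" unfolding setting1_def setting2_def by auto
        thus False using sett by blast
      qed
      hence kk: "\<kappa>^2 > 0" by simp
      have "0 < \<kappa>^2 * (1 + c)" using kk cp by simp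
      hence lt: "(1 - \<kappa>^2) * (1 + c) < 1 + c" by (simp add: algebra_simps)
      have "2 * c < 2 * c * a2" using cp g2 by simp
      hence "c < 1" using E2 lt by simp
      moreover have "2 < 2 * c * a2" using g1 a1c by simp
      hence "1 < c" using E2 lt by simp
      ultimately show False by simp
    qed
  qed
  hence "w1 = w2" using w12 by simp
  hence "\<kappa> *\<^sub>R sgn (X0 - P1) = \<kappa> *\<^sub>R sgn (X0 - P2)" unfolding w1_def w2_def by simp
  moreover have "\<kappa> \<noteq> 0" using sett unfolding setting1_def setting2_def by auto
  ultimately have esame: "sgn (X0 - P1) = sgn (X0 - P2)" by simp
  define m where "m = - sgn (X0 - P1)"
  have X0P1: "X0 - P1 \<noteq> 0" using F1(1) unfolding X0_def by simp
  have m1: "m \<in> sphere 0 1" unfolding m_def using X0P1 by (simp add: norm_sgn)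
  have onray: "P \<in> {X0 + t *\<^sub>R m | t. t \<ge> 0}" if "X0 - P \<noteq> 0" "sgn (X0 - P) = - m" for P
  proof -
    have "X0 - P = norm (X0 - P) *\<^sub>R sgn (X0 - P)" using that(1) by (simp add: sgn_div_norm)
    hence "P = X0 + norm (X0 - P) *\<^sub>R m" using that(2) by (simp add: algebra_simps)
    thus ?thesis by auto
  qed
  have r1: "P1 \<in> {X0 + t *\<^sub>R m | t. t \<ge> 0}" by (rule onray[OF X0P1]) (simp add: m_def)
  have r2: "P2 \<in> {X0 + t *\<^sub>R m | t. t \<ge> 0}"
    by (rule onray) (use F2(1) esame in \<open>auto simp: X0_def m_def\<close>)
  have X0c: "X0 \<in> cone_r \<Omega> r0" unfolding cone_r_def X0_def using x rx bnd by blast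
  have rc: "ray_condition \<Omega> D r0"
  proof (cases "\<kappa> < -1")
    case True
    hence "setting1 \<kappa> \<Omega> D r0" using sett unfolding setting2_def by auto
    thus ?thesis using set1_facts[OF _ P1(1)] by metis
  next
    case False
    hence "setting2 \<kappa> \<Omega> D r0" using sett unfolding setting1_def by auto
    thus ?thesis using set2_facts[OF _ P1(1)] by metis
  qed
  have rc': "\<forall>m\<in>sphere 0 1. \<forall>x\<in>cone_r \<Omega> r0.
        card (closure D \<inter> {x + t *\<^sub>R m | t. t \<ge> 0}) \<le> 1 \<and> finite (closure D \<inter> {x + t *\<^sub>R m | t. t \<ge> 0})"
    using rc unfolding ray_condition_def .
  have cf0: "card (closure D \<inter> {X0 + t *\<^sub>R m | t. t \<ge> 0}) \<le> 1 \<and> finite (closure D \<inter> {X0 + t *\<^sub>R m | t. t \<ge> 0})"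
    using bspec[OF bspec[OF rc' m1] X0c] .
  have cf: "card (closure D \<inter> {X0 + t *\<^sub>R m | t. t \<ge> 0}) \<le> Suc 0" "finite (closure D \<inter> {X0 + t *\<^sub>R m | t. t \<ge> 0})"
    using cf0 by simp_all
  have "\<forall>a1\<in>closure D \<inter> {X0 + t *\<^sub>R m | t. t \<ge> 0}. \<forall>a2\<in>closure D \<inter> {X0 + t *\<^sub>R m | t. t \<ge> 0}. a1 = a2"
    using cf(1) card_le_Suc0_iff_eq[OF cf(2)] by blast
  moreover have "P1 \<in> closure D \<inter> {X0 + t *\<^sub>R m | t. t \<ge> 0}" using r1 P1(1) by blast
  moreover have "P2 \<in> closure D \<inter> {X0 + t *\<^sub>R m | t. t \<ge> 0}" using r2 P2(1) by blast
  ultimately show "P1 = P2" by blast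
qed



lemma part_c:
  fixes \<Omega> D :: "'a::euclidean_space set"
  assumes st: "standing \<Omega> D" and sett: "setting1 \<kappa> \<Omega> D r0 \<or> setting2 \<kappa> \<Omega> D r0"
    and nf: "\<And>k. near_field_refractor \<kappa> \<Omega> D r0 (\<rho>s k)" and C: "C > 0"
    and bnd: "\<forall>y\<in>closure \<Omega>. C \<le> \<rho> y \<and> \<rho> y \<le> r0"
    and conv: "\<forall>y\<in>closure \<Omega>. (\<lambda>n. \<rho>s n y) \<longlonglongrightarrow> \<rho> y"
    and G: "openin (top_of_set (closure D)) G"
  shows "trace_map \<kappa> \<Omega> D \<rho> G \<subseteq> liminf (\<lambda>k. trace_map \<kappa> \<Omega> D (\<rho>s k) G) \<union> singular_set \<Omega> \<rho>"
proof
  fix x assume xt: "x \<in> trace_map \<kappa> \<Omega> D \<rho> G"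
  then obtain P b where x: "x \<in> closure \<Omega>" and PG: "P \<in> G" and P: "P \<in> closure D" "\<kappa> * norm P < b" "b < norm P"
    "supports \<kappa> \<Omega> \<rho> P b x"
    unfolding trace_map_def refractor_map_def by blast
  show "x \<in> liminf (\<lambda>k. trace_map \<kappa> \<Omega> D (\<rho>s k) G) \<union> singular_set \<Omega> \<rho>"
  proof (cases "x \<in> singular_set \<Omega> \<rho>")
    case True
    then show ?thesis by simp
  next
    case False
    hence xO: "x \<in> \<Omega>" and diff: "(\<lambda>y. \<rho> (y /\<^sub>R norm y)) differentiable (at x)"
      using x unfolding singular_set_def by auto
    have "\<forall>k. \<exists>Pb. fst Pb \<in> closure D \<and> \<kappa> * norm (fst Pb) < snd Pb \<and> snd Pb < norm (fst Pb)
               \<and> supports \<kappa> \<Omega> (\<rho>s k) (fst Pb) (snd Pb) x"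
    proof
      fix k
      obtain P b where "P \<in> closure D" "\<kappa> * norm P < b" "b < norm P" "supports \<kappa> \<Omega> (\<rho>s k) P b x"
        using nf[of k] x unfolding near_field_refractor_def by blast
      thus "\<exists>Pb. fst Pb \<in> closure D \<and> \<kappa> * norm (fst Pb) < snd Pb \<and> snd Pb < norm (fst Pb)
               \<and> supports \<kappa> \<Omega> (\<rho>s k) (fst Pb) (snd Pb) x" by (intro exI[of _ "(P, b)"]) simp
    qed
    from choice[OF this] obtain Pb where Pb: "\<forall>k. fst (Pb k) \<in> closure D \<and> \<kappa> * norm (fst (Pb k)) < snd (Pb k)
        \<and> snd (Pb k) < norm (fst (Pb k)) \<and> supports \<kappa> \<Omega> (\<rho>s k) (fst (Pb k)) (snd (Pb k)) x" by blast
    obtain U where U: "open U" "G = closure D \<inter> U" using G unfolding openin_open by blast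
    have cD: "compact (closure D)" using st unfolding standing_def by blast
    have ev: "eventually (\<lambda>k. fst (Pb k) \<in> G) sequentially"
    proof (rule ccontr)
      assume "\<not> eventually (\<lambda>k. fst (Pb k) \<in> G) sequentially"
      hence "frequently (\<lambda>k. fst (Pb k) \<notin> G) sequentially" by (simp add: not_eventually)
      hence "\<forall>N. \<exists>n\<ge>N. fst (Pb n) \<notin> G" unfolding frequently_sequentially .
      from choice[OF this] obtain j where j: "\<forall>N. j N \<ge> N \<and> fst (Pb (j N)) \<notin> G" by blast
      define S where "S = closure D \<inter> - U"
      have cS: "compact S" unfolding S_def using cD U(1) by (intro compact_Int_closed) auto
      have SD: "S \<subseteq> closure D" unfolding S_def by blast
      have fj: "filterlim j sequentially sequentially"
        by (rule filterlim_at_top_mono[OF filterlim_ident]) (use j in auto)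
      have conv': "\<forall>y\<in>closure \<Omega>. (\<lambda>n. \<rho>s (j n) y) \<longlonglongrightarrow> \<rho> y"
      proof
        fix y assume "y \<in> closure \<Omega>"
        hence "(\<lambda>n. \<rho>s n y) \<longlonglongrightarrow> \<rho> y" using conv by auto
        from filterlim_compose[OF this fj] show "(\<lambda>n. \<rho>s (j n) y) \<longlonglongrightarrow> \<rho> y" .
      qed
      have Pn: "\<forall>n. fst (Pb (j n)) \<in> S \<and> \<kappa> * norm (fst (Pb (j n))) < snd (Pb (j n)) \<and> snd (Pb (j n)) < norm (fst (Pb (j n)))
                  \<and> supports \<kappa> \<Omega> (\<rho>s (j n)) (fst (Pb (j n))) (snd (Pb (j n))) x"
      proof
        fix n
        have "fst (Pb (j n)) \<notin> G" using j by blast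
        moreover have "fst (Pb (j n)) \<in> closure D \<and> \<kappa> * norm (fst (Pb (j n))) < snd (Pb (j n)) \<and> snd (Pb (j n)) < norm (fst (Pb (j n)))
                  \<and> supports \<kappa> \<Omega> (\<rho>s (j n)) (fst (Pb (j n))) (snd (Pb (j n))) x" using Pb by blast
        ultimately show "fst (Pb (j n)) \<in> S \<and> \<kappa> * norm (fst (Pb (j n))) < snd (Pb (j n)) \<and> snd (Pb (j n)) < norm (fst (Pb (j n)))
                  \<and> supports \<kappa> \<Omega> (\<rho>s (j n)) (fst (Pb (j n))) (snd (Pb (j n))) x"
          unfolding S_def U(2) by blast
      qed
      obtain P' b' where P': "P' \<in> S" "\<kappa> * norm P' < b'" "b' < norm P'" "supports \<kappa> \<Omega> \<rho> P' b' x"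
        using closure_seq[OF st sett C bnd conv' x cS SD Pn] by blast
      have "P' \<in> closure D" using P'(1) SD by blast
      hence "P' = P" using uniq[OF st sett C bnd xO diff _ P'(2,3,4) P] by blast
      thus False using P'(1) PG U(2) unfolding S_def by blast
    qed
    have "eventually (\<lambda>k. x \<in> trace_map \<kappa> \<Omega> D (\<rho>s k) G) sequentially"
    proof (rule eventually_mono[OF ev])
      fix k assume "fst (Pb k) \<in> G"
      thus "x \<in> trace_map \<kappa> \<Omega> D (\<rho>s k) G"
        unfolding trace_map_def refractor_map_def using x Pb by blast
    qed
    hence "x \<in> liminf (\<lambda>k. trace_map \<kappa> \<Omega> D (\<rho>s k) G)" unfolding mem_liminf_iff .
    thus ?thesis by simp
  qed
qed

theorem lemma3p9:
  fixes \<Omega> D :: "'a::euclidean_space set"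
    and \<kappa> r0 C :: real
    and \<rho>s :: "nat \<Rightarrow> 'a \<Rightarrow> real" and \<rho> :: "'a \<Rightarrow> real"
  assumes "standing \<Omega> D"
    and "setting1 \<kappa> \<Omega> D r0 \<or> setting2 \<kappa> \<Omega> D r0"
    and "\<And>k. near_field_refractor \<kappa> \<Omega> D r0 (\<rho>s k)"
    and "C > 0"
    and "\<And>k x. x \<in> closure \<Omega> \<Longrightarrow> C \<le> \<rho>s k x \<and> \<rho>s k x \<le> r0"
    and "uniform_limit (closure \<Omega>) \<rho>s \<rho> sequentially"
  shows "near_field_refractor \<kappa> \<Omega> D r0 \<rho>
    \<and> (\<forall>K. compact K \<and> K \<subseteq> closure D \<longrightarrow>
          limsup (\<lambda>k. trace_map \<kappa> \<Omega> D (\<rho>s k) K) \<subseteq> trace_map \<kappa> \<Omega> D \<rho> K)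
    \<and> (\<forall>G. openin (top_of_set (closure D)) G \<longrightarrow>
          trace_map \<kappa> \<Omega> D \<rho> G
            \<subseteq> liminf (\<lambda>k. trace_map \<kappa> \<Omega> D (\<rho>s k) G) \<union> singular_set \<Omega> \<rho>)"
proof -
  note rb = rho_bounds[OF assms(5,6)]
  show ?thesis
  proof (intro conjI allI impI)
    show "near_field_refractor \<kappa> \<Omega> D r0 \<rho>"
      by (rule part_a[OF assms(1,2,3,4) rb(2) rb(1)])
  next
    fix K assume "compact K \<and> K \<subseteq> closure D"
    thus "limsup (\<lambda>k. trace_map \<kappa> \<Omega> D (\<rho>s k) K) \<subseteq> trace_map \<kappa> \<Omega> D \<rho> K"
      using part_b[OF assms(1,2,4) rb(2) rb(1)] by blast
  next
    fix G assume "openin (top_of_set (closure D)) G"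
    thus "trace_map \<kappa> \<Omega> D \<rho> G \<subseteq> liminf (\<lambda>k. trace_map \<kappa> \<Omega> D (\<rho>s k) G) \<union> singular_set \<Omega> \<rho>"
      using part_c[OF assms(1,2,3,4) rb(2) rb(1)] by blast
  qed
qed


end
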